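(* There is a constant $C>0$ depending only on $d$ such that for all integers $j,p\ge0$, all $g_j\in\mathcal H^d_j$, $g_p\in\mathcal H^d_p$, all $\mathbf x\in\mathbb S^{d-1}$, and all $\ell\ge1$: with $f(\boldsymbol\xi)=K^\infty(\mathbf x,\boldsymbol\xi)g_j(\boldsymbol\xi)$ and $g_{jp}(\boldsymbol\xi)=g_j(\boldsymbol\xi)g_p(\boldsymbol\xi)$, $$\mathrm{dist}(f,\Pi^d_\ell)\le C\frac{j+1}{\ell}\|g_j\|_{L^\infty},\qquad\mathrm{dist}(g_{jp},\Pi^d_\ell)\le C\frac{j+p}{\ell}\|g_j\|_{L^\infty}\|g_p\|_{L^\infty}.$$
   Context: $d\ge2$; $\mathcal H^d_j$ is the space of spherical harmonics of degree $j$ on $\mathbb S^{d-1}$, $\Pi^d_\ell=\bigoplus_{i\le\ell}\mathcal H^d_i$, and $\mathrm{dist}(f,\Pi^d_\ell)=\min_{h\in\Pi^d_\ell}\|f-h\|_{L^\infty(\mathbb S^{d-1})}$. $K^\infty(\mathbf x,\mathbf y)=\frac{(\langle\mathbf x,\mathbf y\rangle+1)(\pi-\arccos\langle\mathbf x,\mathbf y\rangle)}{4\pi}$. *)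

theory Defs
  imports "HOL-Analysis.Analysis"
begin

text \<open>Points of R^d are vectors of type real^'n with d = CARD('n).
  The unit sphere S^{d-1} is sphere 0 1.\<close>

definition unit_sph :: "(real^'n) set" where
  "unit_sph = sphere 0 1"

definition homog_poly :: "nat \<Rightarrow> (real^'n \<Rightarrow> real) \<Rightarrow> bool" where
  "homog_poly j P \<longleftrightarrow> (\<exists>c :: ('n \<Rightarrow> nat) \<Rightarrow> real.
      \<forall>x. P x = (\<Sum>\<alpha>\<in>{\<alpha>. (\<Sum>i\<in>UNIV. \<alpha> i) = j}. c \<alpha> * (\<Prod>i\<in>UNIV. (x $ i) ^ \<alpha> i)))"

definition partial_i :: "'n \<Rightarrow> (real^'n \<Rightarrow> real) \<Rightarrow> real^'n \<Rightarrow> real" where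
  "partial_i i P x = deriv (\<lambda>t. P (x + t *\<^sub>R axis i 1)) 0"

definition laplacian :: "(real^'n \<Rightarrow> real) \<Rightarrow> real^'n \<Rightarrow> real" where
  "laplacian P x = (\<Sum>i\<in>UNIV. partial_i i (partial_i i P) x)"

definition sph_harm :: "nat \<Rightarrow> (real^'n \<Rightarrow> real) set" where
  "sph_harm j = {g. \<exists>P. homog_poly j P \<and> (\<forall>x. laplacian P x = 0) \<and>
                       (\<forall>\<xi>\<in>unit_sph. g \<xi> = P \<xi>)}"

definition Pi_sph :: "nat \<Rightarrow> (real^'n \<Rightarrow> real) set" where
  "Pi_sph l = {h. \<exists>g. (\<forall>i\<le>l. g i \<in> sph_harm i) \<and>
                     (\<forall>\<xi>\<in>unit_sph. h \<xi> = (\<Sum>i\<le>l. g i \<xi>))}"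

definition sup_norm_sph :: "(real^'n \<Rightarrow> real) \<Rightarrow> real" where
  "sup_norm_sph f = (SUP \<xi>\<in>unit_sph. \<bar>f \<xi>\<bar>)"

definition dist_Pi :: "(real^'n \<Rightarrow> real) \<Rightarrow> nat \<Rightarrow> real" where
  "dist_Pi f l = (INF h\<in>Pi_sph l. sup_norm_sph (\<lambda>\<xi>. f \<xi> - h \<xi>))"

definition K_inf :: "real^'n \<Rightarrow> real^'n \<Rightarrow> real" where
  "K_inf x y = ((x \<bullet> y + 1) * (pi - arccos (x \<bullet> y))) / (4 * pi)"

end

theory Submission
  imports Defs "HOL-Analysis.Analysis"
begin

inductive hp :: "nat \<Rightarrow> (real^'n \<Rightarrow> real) \<Rightarrow> bool" where
  hp_const: "hp 0 (\<lambda>x. c)"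
| hp_var: "hp j P \<Longrightarrow> hp (Suc j) (\<lambda>x. x$i * P x)"
| hp_add: "hp j P \<Longrightarrow> hp j Q \<Longrightarrow> hp j (\<lambda>x. P x + Q x)"

lemma hp_cong: "hp j P \<Longrightarrow> (\<And>x. P x = Q x) \<Longrightarrow> hp j Q"
proof -
  assume "hp j P" "\<And>x. P x = Q x"
  then have "P = Q" by auto
  with \<open>hp j P\<close> show ?thesis by simp
qed

lemma hp_zero: "hp j (\<lambda>x. 0)"
proof (induction j)
  case 0 show ?case using hp_const[of 0] .
next
  case (Suc j) from hp_var[OF Suc, of undefined] show ?case by simp
qed

lemma hp_scale: "hp j P \<Longrightarrow> hp j (\<lambda>x. c * P x)"
proof (induction rule: hp.induct)
  case (hp_const d) show ?case using hp.hp_const[of "c*d"] .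
next
  case (hp_var j P i)
  from hp.hp_var[OF hp_var.IH, of i] show ?case by (rule hp_cong) (simp add: algebra_simps)
next
  case (hp_add j P Q)
  from hp.hp_add[OF hp_add.IH] show ?case by (rule hp_cong) (simp add: algebra_simps)
qed

lemma hp_diff: "hp j P \<Longrightarrow> hp j Q \<Longrightarrow> hp j (\<lambda>x. P x - Q x)"
proof -
  assume a: "hp j P" "hp j Q"
  have "hp j (\<lambda>x. (-1) * Q x)" by (rule hp_scale) (fact a(2))
  from hp_add[OF a(1) this] show ?thesis by (rule hp_cong) simp
qed

lemma hp_mult: "hp a P \<Longrightarrow> hp b Q \<Longrightarrow> hp (a+b) (\<lambda>x. P x * Q x)"
proof (induction arbitrary: Q rule: hp.induct)
  case (hp_const c) then show ?case using hp_scale by simp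
next
  case (hp_var j P i)
  from hp.hp_var[OF hp_var.IH[OF hp_var.prems], of i] have "hp (Suc j + b) (\<lambda>x. x$i * (P x * Q x))" by simp
  then show ?case by (rule hp_cong) (simp add: algebra_simps)
next
  case (hp_add j P1 P2)
  from hp.hp_add[OF hp_add.IH(1)[OF hp_add.prems] hp_add.IH(2)[OF hp_add.prems]]
  show ?case by (rule hp_cong) (simp add: algebra_simps)
qed

lemma hp_sum: assumes "\<And>a. a \<in> A \<Longrightarrow> hp j (F a)" shows "hp j (\<lambda>x. \<Sum>a\<in>A. F a x)"
proof (cases "finite A")
  case True
  then show ?thesis using assms
  proof (induction A rule: finite_induct)
    case empty then show ?case by (simp add: hp_zero)
  next
    case (insert a A)
    from hp_add[OF insert.prems[of a] insert.IH] insert show ?case by (rule_tac hp_cong) auto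
  qed
qed (simp add: hp_zero)

lemma hp_prod: assumes "\<And>a. a \<in> A \<Longrightarrow> hp (\<alpha> a) (F a)" shows "hp (\<Sum>a\<in>A. \<alpha> a) (\<lambda>x. \<Prod>a\<in>A. F a x)"
proof (cases "finite A")
  case True
  then show ?thesis using assms
  proof (induction A rule: finite_induct)
    case empty then show ?case using hp_const[of 1] by simp
  next
    case (insert a A)
    from hp_mult[OF insert.prems[of a] insert.IH] insert show ?case by (rule_tac hp_cong) auto
  qed
qed (simp add: hp_const)

lemma hp_coord: "hp 1 (\<lambda>x. x$i)"
  using hp_var[OF hp_const[of 1], of i] by simp

lemma hp_power: "hp j P \<Longrightarrow> hp (j*k) (\<lambda>x. P x ^ k)"
proof (induction k)
  case 0 then show ?case using hp_const[of 1] by simp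
next
  case (Suc k)
  from hp_mult[OF Suc.prems Suc.IH[OF Suc.prems]] show ?case by (simp add: algebra_simps)
qed

lemma homog_poly_hp: fixes P :: "real^'n \<Rightarrow> real" shows "homog_poly j P \<Longrightarrow> hp j P"
proof -
  assume "homog_poly j P"
  then obtain c :: "('n \<Rightarrow> nat) \<Rightarrow> real" where c:
    "\<forall>x::real^'n. P x = (\<Sum>\<alpha>\<in>{\<alpha>. (\<Sum>i\<in>UNIV. \<alpha> i) = j}. c \<alpha> * (\<Prod>i\<in>UNIV. (x $ i) ^ \<alpha> i))"
    unfolding homog_poly_def by blast
  have "hp j (\<lambda>x. \<Sum>\<alpha>\<in>{\<alpha>. (\<Sum>i\<in>UNIV. \<alpha> i) = j}. c \<alpha> * (\<Prod>i\<in>UNIV. (x $ i) ^ \<alpha> i))"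
  proof (rule hp_sum)
    fix \<alpha> :: "'n \<Rightarrow> nat" assume "\<alpha> \<in> {\<alpha>. (\<Sum>i\<in>UNIV. \<alpha> i) = j}"
    then have s: "(\<Sum>i\<in>UNIV. \<alpha> i * 1) = j" by simp
    have "hp (\<Sum>i\<in>UNIV. 1 * \<alpha> i) (\<lambda>x. \<Prod>i\<in>UNIV. (x $ i) ^ \<alpha> i)"
      by (rule hp_prod) (rule hp_power[OF hp_coord])
    with s show "hp j (\<lambda>x. c \<alpha> * (\<Prod>i\<in>UNIV. (x $ i) ^ \<alpha> i))"
      by (intro hp_scale) (simp add: mult.commute)
  qed
  with c show ?thesis by (rule_tac hp_cong) auto
qed

lemma finite_multi: "finite {\<alpha>::'n::finite \<Rightarrow> nat. (\<Sum>i\<in>UNIV. \<alpha> i) = j}"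
proof (rule finite_subset)
  show "{\<alpha>::'n \<Rightarrow> nat. (\<Sum>i\<in>UNIV. \<alpha> i) = j} \<subseteq> Pi\<^sub>E UNIV (\<lambda>_. {..j})"
  proof
    fix \<alpha> :: "'n \<Rightarrow> nat" assume "\<alpha> \<in> {\<alpha>. (\<Sum>i\<in>UNIV. \<alpha> i) = j}"
    then have "\<alpha> k \<le> j" for k using member_le_sum[of k UNIV \<alpha>] by auto
    then show "\<alpha> \<in> Pi\<^sub>E UNIV (\<lambda>_. {..j})" by (simp add: PiE_UNIV_domain)
  qed
  show "finite (Pi\<^sub>E (UNIV::'n set) (\<lambda>_. {..j}))" by (rule finite_PiE) auto
qed

lemma sum_upd: "(\<Sum>k\<in>UNIV. (\<alpha>(i:=v)) k) + \<alpha> i = (\<Sum>k\<in>UNIV. (\<alpha>::'n::finite\<Rightarrow>nat) k) + v"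
proof -
  have "(\<Sum>k\<in>UNIV. (\<alpha>(i:=v)) k) = v + (\<Sum>k\<in>UNIV-{i}. \<alpha> k)"
    by (subst sum.remove[of _ i]) (auto intro!: sum.cong)
  moreover have "(\<Sum>k\<in>UNIV. \<alpha> k) = \<alpha> i + (\<Sum>k\<in>UNIV-{i}. \<alpha> k)"
    by (subst sum.remove[of _ i]) auto
  ultimately show ?thesis by simp
qed

lemma prod_upd: "(\<Prod>k\<in>UNIV. (x::real^'n) $ k ^ (\<alpha>(i:=Suc (\<alpha> i))) k) = x$i * (\<Prod>k\<in>UNIV. x $ k ^ \<alpha> k)"
proof -
  have "(\<Prod>k\<in>UNIV. x $ k ^ (\<alpha>(i:=Suc (\<alpha> i))) k) = x$i ^ Suc (\<alpha> i) * (\<Prod>k\<in>UNIV-{i}. x $ k ^ \<alpha> k)"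
    by (subst prod.remove[of _ i]) (auto intro!: prod.cong)
  moreover have "(\<Prod>k\<in>UNIV. x $ k ^ \<alpha> k) = x$i ^ \<alpha> i * (\<Prod>k\<in>UNIV-{i}. x $ k ^ \<alpha> k)"
    by (subst prod.remove[of _ i]) auto
  ultimately show ?thesis by simp
qed

lemma hp_homog_poly: fixes P :: "real^'n \<Rightarrow> real" shows "hp j P \<Longrightarrow> homog_poly j P"
proof (induction rule: hp.induct)
  case (hp_const c)
  have "{\<alpha>::'n\<Rightarrow>nat. (\<Sum>i\<in>UNIV. \<alpha> i) = 0} = {\<lambda>_. 0}"
  proof (intro set_eqI iffI)
    fix \<alpha> :: "'n \<Rightarrow> nat" assume "\<alpha> \<in> {\<alpha>. (\<Sum>i\<in>UNIV. \<alpha> i) = 0}"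
    then have "\<forall>i\<in>UNIV. \<alpha> i = 0" using sum_eq_0_iff[of UNIV \<alpha>] by simp
    then show "\<alpha> \<in> {\<lambda>_. 0}" by (simp add: fun_eq_iff)
  qed simp
  then show ?case unfolding homog_poly_def by (intro exI[of _ "\<lambda>_. c"]) simp
next
  case (hp_add j P Q)
  then obtain c d where c: "\<forall>x. P x = (\<Sum>\<alpha>\<in>{\<alpha>. (\<Sum>i\<in>UNIV. \<alpha> i) = j}. c \<alpha> * (\<Prod>i\<in>UNIV. (x $ i) ^ \<alpha> i))"
    and d: "\<forall>x. Q x = (\<Sum>\<alpha>\<in>{\<alpha>. (\<Sum>i\<in>UNIV. \<alpha> i) = j}. d \<alpha> * (\<Prod>i\<in>UNIV. (x $ i) ^ \<alpha> i))"
    unfolding homog_poly_def by blast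
  show ?case unfolding homog_poly_def
    by (intro exI[of _ "\<lambda>\<alpha>. c \<alpha> + d \<alpha>"]) (simp add: c d sum.distrib algebra_simps)
next
  case (hp_var j P i)
  then obtain c where c: "\<forall>x. P x = (\<Sum>\<alpha>\<in>{\<alpha>. (\<Sum>i\<in>UNIV. \<alpha> i) = j}. c \<alpha> * (\<Prod>i\<in>UNIV. (x $ i) ^ \<alpha> i))"
    unfolding homog_poly_def by blast
  define c' where "c' \<beta> = (if 0 < \<beta> i then c (\<beta>(i := \<beta> i - 1)) else 0)" for \<beta> :: "'n \<Rightarrow> nat"
  let ?S = "\<lambda>j. {\<alpha>::'n\<Rightarrow>nat. (\<Sum>i\<in>UNIV. \<alpha> i) = j}"
  have "x$i * P x = (\<Sum>\<beta>\<in>?S (Suc j). c' \<beta> * (\<Prod>k\<in>UNIV. (x $ k) ^ \<beta> k))" for x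
  proof -
    have "x$i * P x = (\<Sum>\<alpha>\<in>?S j. c \<alpha> * (x$i * (\<Prod>k\<in>UNIV. (x $ k) ^ \<alpha> k)))"
      by (simp add: c sum_distrib_left algebra_simps)
    also have "\<dots> = (\<Sum>\<beta>\<in>?S (Suc j) \<inter> {\<beta>. 0 < \<beta> i}. c' \<beta> * (\<Prod>k\<in>UNIV. (x $ k) ^ \<beta> k))"
    proof (rule sum.reindex_bij_witness[where i="\<lambda>\<beta>. \<beta>(i := \<beta> i - 1)" and j="\<lambda>\<alpha>. \<alpha>(i := Suc (\<alpha> i))"])
      fix \<alpha> assume a: "\<alpha> \<in> ?S j"
      show "(\<alpha>(i := Suc (\<alpha> i)))(i := (\<alpha>(i := Suc (\<alpha> i))) i - 1) = \<alpha>" by auto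
      show "\<alpha>(i := Suc (\<alpha> i)) \<in> ?S (Suc j) \<inter> {\<beta>. 0 < \<beta> i}"
        using a sum_upd[of \<alpha> i "Suc (\<alpha> i)"] by auto
      show "c' (\<alpha>(i := Suc (\<alpha> i))) * (\<Prod>k\<in>UNIV. x $ k ^ (\<alpha>(i := Suc (\<alpha> i))) k) =
         c \<alpha> * (x $ i * (\<Prod>k\<in>UNIV. x $ k ^ \<alpha> k))"
        unfolding prod_upd by (simp add: c'_def)
    next
      fix \<beta> assume b: "\<beta> \<in> ?S (Suc j) \<inter> {\<beta>. 0 < \<beta> i}"
      show "(\<beta>(i := \<beta> i - 1))(i := Suc ((\<beta>(i := \<beta> i - 1)) i)) = \<beta>" using b by auto
      show "\<beta>(i := \<beta> i - 1) \<in> ?S j" using b sum_upd[of \<beta> i "\<beta> i - 1"] by auto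
    qed
    also have "\<dots> = (\<Sum>\<beta>\<in>?S (Suc j). c' \<beta> * (\<Prod>k\<in>UNIV. (x $ k) ^ \<beta> k))"
      by (rule sum.mono_neutral_left) (auto simp: finite_multi c'_def)
    finally show ?thesis .
  qed
  then show ?case unfolding homog_poly_def by blast
qed

definition ld :: "'n::finite \<Rightarrow> (real^'n \<Rightarrow> real) \<Rightarrow> (real^'n \<Rightarrow> real) \<Rightarrow> bool" where
  "ld i F DF \<longleftrightarrow> (\<forall>x. ((\<lambda>t. F (x + t *\<^sub>R axis i 1)) has_real_derivative DF x) (at 0))"

lemma ld_partial: "ld i F DF \<Longrightarrow> partial_i i F = DF"
  unfolding ld_def partial_i_def by (auto intro!: ext DERIV_imp_deriv)

lemma ld_const: "ld i (\<lambda>x. c) (\<lambda>x. 0)"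
  unfolding ld_def by auto

lemma ld_coord: "ld i (\<lambda>x. x$k) (\<lambda>x. if k = i then 1 else 0)"
  unfolding ld_def
proof
  fix x :: "real^'a"
  have "((\<lambda>t. x$k + t * (if k = i then 1 else 0)) has_real_derivative (if k = i then 1 else 0)) (at 0)"
    by (auto intro!: derivative_eq_intros)
  then show "((\<lambda>t. (x + t *\<^sub>R axis i 1) $ k) has_real_derivative (if k = i then 1 else 0)) (at 0)"
    by (simp add: axis_def)
qed

lemma ld_add: "ld i F DF \<Longrightarrow> ld i G DG \<Longrightarrow> ld i (\<lambda>x. F x + G x) (\<lambda>x. DF x + DG x)"
  unfolding ld_def by (auto intro!: DERIV_add)

lemma ld_mult: "ld i F DF \<Longrightarrow> ld i G DG \<Longrightarrow> ld i (\<lambda>x. F x * G x) (\<lambda>x. DF x * G x + F x * DG x)"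
  unfolding ld_def
proof
  fix x
  assume "\<forall>x. ((\<lambda>t. F (x + t *\<^sub>R axis i 1)) has_real_derivative DF x) (at 0)"
    "\<forall>x. ((\<lambda>t. G (x + t *\<^sub>R axis i 1)) has_real_derivative DG x) (at 0)"
  from DERIV_mult[OF this[THEN spec, of x]]
  show "((\<lambda>t. F (x + t *\<^sub>R axis i 1) * G (x + t *\<^sub>R axis i 1)) has_real_derivative DF x * G x + F x * DG x) (at 0)"
    by (simp add: mult.commute)
qed

lemma ld_scale: "ld i F DF \<Longrightarrow> ld i (\<lambda>x. c * F x) (\<lambda>x. c * DF x)"
  using ld_mult[OF ld_const[of i c]] by simp

lemma ld_sum: "(\<And>a. a \<in> A \<Longrightarrow> ld i (F a) (DF a)) \<Longrightarrow> ld i (\<lambda>x. \<Sum>a\<in>A. F a x) (\<lambda>x. \<Sum>a\<in>A. DF a x)"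
  unfolding ld_def by (auto intro!: DERIV_sum)

lemma hp_ld: "hp j P \<Longrightarrow> \<exists>D. ld i P D \<and> hp (j - 1) D \<and> (j = 0 \<longrightarrow> D = (\<lambda>x. 0))"
proof (induction rule: hp.induct)
  case (hp_const c) then show ?case using ld_const hp_zero by blast
next
  case (hp_add j P Q)
  then obtain D E where D: "ld i P D" "hp (j - 1) D" "j = 0 \<longrightarrow> D = (\<lambda>x. 0)"
    and E: "ld i Q E" "hp (j - 1) E" "j = 0 \<longrightarrow> E = (\<lambda>x. 0)" by blast
  show ?case using ld_add[OF D(1) E(1)] hp.hp_add[OF D(2) E(2)] D(3) E(3) by auto
next
  case (hp_var j P k)
  then obtain D where D: "ld i P D" "hp (j - 1) D" "j = 0 \<longrightarrow> D = (\<lambda>x. 0)" by blast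
  have L: "ld i (\<lambda>x. x $ k * P x) (\<lambda>x. (if k = i then 1 else 0) * P x + x $ k * D x)"
    by (rule ld_mult[OF ld_coord D(1)])
  have "hp j (\<lambda>x. (if k = i then 1 else 0) * P x + x $ k * D x)"
  proof (cases j)
    case 0
    then show ?thesis using D(3) hp_scale[OF hp_var.hyps, of "if k = i then 1 else 0"] by simp
  next
    case (Suc j')
    with D(2) have "hp (Suc j') (\<lambda>x. x$k * D x)" using hp.hp_var by simp
    then show ?thesis using Suc hp.hp_add[OF hp_scale[OF hp_var.hyps, of "if k = i then 1 else 0"]] by simp
  qed
  then show ?case using L by auto
qed

lemma hp_partial_ld: "hp j P \<Longrightarrow> ld i P (partial_i i P)"
  using hp_ld[of j P i] ld_partial by metis

lemma hp_partial: "hp j P \<Longrightarrow> hp (j - 1) (partial_i i P)"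
  using hp_ld[of j P i] ld_partial by metis

lemma hp0_partial: "hp 0 P \<Longrightarrow> partial_i i P = (\<lambda>x. 0)"
  using hp_ld[of 0 P i] ld_partial by metis

lemma partial_add: "hp j P \<Longrightarrow> hp j Q \<Longrightarrow> partial_i i (\<lambda>x. P x + Q x) = (\<lambda>x. partial_i i P x + partial_i i Q x)"
  by (rule ld_partial, rule ld_add; rule hp_partial_ld)

lemma partial_scale: "hp j P \<Longrightarrow> partial_i i (\<lambda>x. c * P x) = (\<lambda>x. c * partial_i i P x)"
  by (rule ld_partial, rule ld_scale, rule hp_partial_ld)

lemma laplacian_eq: "laplacian P = (\<lambda>x. \<Sum>i\<in>UNIV. partial_i i (partial_i i P) x)"
  unfolding laplacian_def by auto

lemma hp_lap: "hp j P \<Longrightarrow> hp (j - 2) (laplacian P)"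
  unfolding laplacian_eq
  by (rule hp_sum) (metis hp_partial diff_diff_left one_add_one)

lemma lap_small: "hp j P \<Longrightarrow> j < 2 \<Longrightarrow> laplacian P x = 0"
proof -
  assume "hp j P" "j < 2"
  then have j1: "j - 1 = 0" by simp
  have "hp 0 (partial_i i P)" for i using hp_partial[OF \<open>hp j P\<close>, of i] unfolding j1 .
  then show ?thesis unfolding laplacian_def by (simp add: hp0_partial)
qed

lemma lap_lin: assumes "hp j P" "hp j Q"
  shows "laplacian (\<lambda>x. a * P x + b * Q x) x = a * laplacian P x + b * laplacian Q x"
proof -
  have "partial_i i (\<lambda>x. a * P x + b * Q x) = (\<lambda>x. a * partial_i i P x + b * partial_i i Q x)" for i
    using partial_add[OF hp_scale[OF assms(1)] hp_scale[OF assms(2)]] partial_scale[OF assms(1)] partial_scale[OF assms(2)] by simp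
  moreover have "partial_i i (\<lambda>x. a * partial_i i P x + b * partial_i i Q x) =
     (\<lambda>x. a * partial_i i (partial_i i P) x + b * partial_i i (partial_i i Q) x)" for i
    using partial_add[OF hp_scale[OF hp_partial[OF assms(1)]] hp_scale[OF hp_partial[OF assms(2)]]]
      partial_scale[OF hp_partial[OF assms(1)]] partial_scale[OF hp_partial[OF assms(2)]] by simp
  ultimately show ?thesis unfolding laplacian_def by (simp add: sum.distrib sum_distrib_left)
qed

lemma hp_harm_zero: "laplacian (\<lambda>x. 0::real) x = 0"
  using lap_small[OF hp_zero[of 0]] by simp

definition r2 :: "real^'n::finite \<Rightarrow> real" where "r2 x = (\<Sum>k\<in>UNIV. (x$k)^2)"

lemma hp_r2: "hp 2 r2"
proof -
  have "hp 2 (\<lambda>x::real^'a. \<Sum>k\<in>UNIV. (x$k)^2)"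
  proof (rule hp_sum)
    fix k show "hp 2 (\<lambda>x::real^'a. (x$k)^2)" using hp_power[OF hp_coord[of k], of 2] by simp
  qed
  then show ?thesis unfolding r2_def by (rule hp_cong) simp
qed

lemma ld_r2: "ld i r2 (\<lambda>x. 2 * x$i)"
proof -
  have "ld i (\<lambda>x. \<Sum>k\<in>UNIV. x$k * x$k) (\<lambda>x. \<Sum>k\<in>UNIV. (if k = i then 1 else 0) * x$k + x$k * (if k = i then 1 else 0))"
    by (rule ld_sum, rule ld_mult; rule ld_coord)
  moreover have "(\<lambda>x::real^'a. \<Sum>k\<in>UNIV. (if k = i then 1 else 0) * x$k + x$k * (if k = i then 1 else 0)) = (\<lambda>x. 2 * x$i)"
    by (auto simp: if_distrib cong: if_cong)
  moreover have "(\<lambda>x::real^'a. \<Sum>k\<in>UNIV. x$k * x$k) = r2"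
    by (auto simp: r2_def power2_eq_square)
  ultimately show ?thesis by simp
qed

lemma euler: fixes Q :: "real^'n \<Rightarrow> real" shows "hp m Q \<Longrightarrow> (\<Sum>i\<in>UNIV. x$i * partial_i i Q x) = m * Q x"
proof (induction arbitrary: x rule: hp.induct)
  case (hp_const c)
  have "partial_i i (\<lambda>x::real^'n. c) = (\<lambda>x. 0)" for i by (rule hp0_partial, rule hp.hp_const)
  then show ?case by simp
next
  case (hp_add j P Q)
  then show ?case by (simp add: partial_add sum.distrib algebra_simps)
next
  case (hp_var j P k)
  have "partial_i i (\<lambda>x. x $ k * P x) = (\<lambda>x. (if k = i then 1 else 0) * P x + x $ k * partial_i i P x)" for i
    by (rule ld_partial, rule ld_mult[OF ld_coord hp_partial_ld[OF hp_var.hyps]])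
  then have "(\<Sum>i\<in>UNIV. x$i * partial_i i (\<lambda>x. x $ k * P x) x) =
     (\<Sum>i\<in>UNIV. (if k = i then x$i * P x else 0) + x$k * (x$i * partial_i i P x))"
    by (intro sum.cong) (auto simp: algebra_simps)
  also have "\<dots> = (\<Sum>i\<in>UNIV. (if k = i then x$i * P x else 0)) + x$k * (\<Sum>i\<in>UNIV. x$i * partial_i i P x)"
    by (simp add: sum.distrib sum_distrib_left)
  also have "\<dots> = x$k * P x + x$k * (j * P x)" using hp_var.IH by simp
  finally show ?case by (simp add: algebra_simps)
qed

lemma lap_r2: fixes Q :: "real^'n \<Rightarrow> real" assumes "hp m Q"
  shows "laplacian (\<lambda>x. r2 x * Q x) x = (2 * CARD('n) + 4 * m) * Q x + r2 x * laplacian Q x"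
proof -
  have P1: "partial_i i (\<lambda>x. r2 x * Q x) = (\<lambda>x. 2 * x$i * Q x + r2 x * partial_i i Q x)" for i
    by (rule ld_partial) (use ld_mult[OF ld_r2 hp_partial_ld[OF assms]] in simp)
  have "ld i (\<lambda>x. 2 * x$i * Q x + r2 x * partial_i i Q x)
     (\<lambda>x. ((2 * (if i = i then 1 else 0)) * Q x + 2 * x$i * partial_i i Q x) +
          (2 * x$i * partial_i i Q x + r2 x * partial_i i (partial_i i Q) x))" for i
    by (intro ld_add ld_mult ld_scale ld_coord hp_partial_ld[OF assms] ld_r2 hp_partial_ld[OF hp_partial[OF assms]])
  then have P2: "partial_i i (partial_i i (\<lambda>x. r2 x * Q x)) =
     (\<lambda>x. 2 * Q x + 4 * (x$i * partial_i i Q x) + r2 x * partial_i i (partial_i i Q) x)" for i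
    unfolding P1 by (subst ld_partial) (auto simp: algebra_simps)
  have E: "(\<Sum>i\<in>UNIV. x$i * partial_i i Q x) = m * Q x" by (rule euler[OF assms])
  have "laplacian (\<lambda>x. r2 x * Q x) x = (\<Sum>i\<in>(UNIV::'n set). 2*Q x) + 4*(\<Sum>i\<in>UNIV. x$i * partial_i i Q x)
      + r2 x * (\<Sum>i\<in>UNIV. partial_i i (partial_i i Q) x)"
    unfolding laplacian_def P2 by (simp add: sum.distrib sum_distrib_left)
  then show ?thesis unfolding E by (simp add: laplacian_def algebra_simps)
qed

lemma solve: fixes R :: "real^'n \<Rightarrow> real"
  shows "hp m R \<Longrightarrow> 0 \<le> c \<Longrightarrow> \<exists>Q. hp m Q \<and> (\<forall>x. laplacian (\<lambda>x. r2 x * Q x) x + c * Q x = R x)"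
proof (induction m arbitrary: c R rule: less_induct)
  case (less m)
  define cm where "cm = 2 * real CARD('n) + 4 * real m + c"
  have "0 < CARD('n)" by (rule finite_UNIV_card_ge_0) simp
  then have "0 < real CARD('n)" by simp
  then have cm: "cm > 0" using less.prems(2) of_nat_0_le_iff[of m] unfolding cm_def by linarith
  show ?case
  proof (cases "m < 2")
    case True
    define Q where "Q x = (1/cm) * R x" for x
    have hQ: "hp m Q" unfolding Q_def by (rule hp_scale) (fact less.prems(1))
    have "laplacian (\<lambda>x. r2 x * Q x) x + c * Q x = R x" for x
    proof -
      have "laplacian (\<lambda>x. r2 x * Q x) x + c * Q x = cm * Q x"
        using lap_r2[OF hQ, of x] lap_small[OF hQ True, of x] by (simp add: cm_def algebra_simps)
      also have "\<dots> = R x" using cm by (simp add: Q_def)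
      finally show ?thesis .
    qed
    then show ?thesis using hQ by blast
  next
    case False
    have hL: "hp (m-2) (laplacian R)" by (rule hp_lap) (fact less.prems(1))
    from less.IH[of "m-2" "laplacian R" cm] hL False cm obtain Q' where
      Q': "hp (m-2) Q'" "\<forall>x. laplacian (\<lambda>x. r2 x * Q' x) x + cm * Q' x = laplacian R x" by auto
    from hp_mult[OF hp_r2 Q'(1)] have "hp (2 + (m - 2)) (\<lambda>x. r2 x * Q' x)" .
    then have hrQ': "hp m (\<lambda>x. r2 x * Q' x)" using False by (simp only: le_add_diff_inverse not_less)
    define Q where "Q x = (1/cm) * R x + (-1/cm) * (r2 x * Q' x)" for x
    have hQ: "hp m Q" unfolding Q_def by (intro hp_add hp_scale less.prems(1) hrQ')
    have LQ: "laplacian Q x = Q' x" for x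
    proof -
      have "laplacian Q x = (1/cm) * laplacian R x + (-1/cm) * laplacian (\<lambda>x. r2 x * Q' x) x"
        unfolding Q_def by (rule lap_lin[OF less.prems(1) hrQ'])
      also have "\<dots> = Q' x" using Q'(2)[rule_format, of x] cm by (simp add: field_simps)
      finally show ?thesis .
    qed
    have "laplacian (\<lambda>x. r2 x * Q x) x + c * Q x = R x" for x
    proof -
      have "laplacian (\<lambda>x. r2 x * Q x) x + c * Q x = cm * Q x + r2 x * Q' x"
        using lap_r2[OF hQ, of x] LQ[of x] by (simp add: cm_def algebra_simps)
      also have "\<dots> = R x" using cm by (simp add: Q_def algebra_simps)
      finally show ?thesis .
    qed
    then show ?thesis using hQ by blast
  qed
qed

lemma fischer: fixes P :: "real^'n \<Rightarrow> real" assumes "hp N P" "2 \<le> N"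
  shows "\<exists>H Q. hp N H \<and> (\<forall>x. laplacian H x = 0) \<and> hp (N-2) Q \<and> (\<forall>x. P x = H x + r2 x * Q x)"
proof -
  from solve[OF hp_lap[OF assms(1)], of 0] obtain Q where
    Q: "hp (N-2) Q" "\<forall>x. laplacian (\<lambda>x. r2 x * Q x) x = laplacian P x" by auto
  from hp_mult[OF hp_r2 Q(1)] have "hp (2 + (N - 2)) (\<lambda>x. r2 x * Q x)" .
  then have hrQ: "hp N (\<lambda>x. r2 x * Q x)" using assms(2) by (simp only: le_add_diff_inverse)
  define H where "H x = 1 * P x + (-1) * (r2 x * Q x)" for x
  have hH: "hp N H" unfolding H_def by (intro hp_add hp_scale assms(1) hrQ)
  have "laplacian H x = 0" for x
    unfolding H_def lap_lin[OF assms(1) hrQ] using Q(2) by simp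
  moreover have "P x = H x + r2 x * Q x" for x by (simp add: H_def)
  ultimately show ?thesis using hH Q(1) by blast
qed

lemma r2_sph: "x \<in> unit_sph \<Longrightarrow> r2 x = 1"
proof -
  assume "x \<in> unit_sph"
  then have "norm x = 1" by (simp add: unit_sph_def)
  then have "x \<bullet> x = 1" by (metis power2_norm_eq_inner one_power2)
  then show ?thesis by (simp add: r2_def inner_vec_def power2_eq_square)
qed

lemma sph_harm_hp: "hp N H \<Longrightarrow> (\<forall>x. laplacian H x = 0) \<Longrightarrow> (\<forall>\<xi>\<in>unit_sph. g \<xi> = H \<xi>) \<Longrightarrow> g \<in> sph_harm N"
  unfolding sph_harm_def using hp_homog_poly by blast

lemma sph_harm_hp': fixes g :: "real^'n \<Rightarrow> real"
  shows "g \<in> sph_harm N \<Longrightarrow> \<exists>H. hp N H \<and> (\<forall>x. laplacian H x = 0) \<and> (\<forall>\<xi>\<in>unit_sph. g \<xi> = H \<xi>)"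
  unfolding sph_harm_def using homog_poly_hp by blast

lemma sph_harm_zero: "(\<lambda>_. 0) \<in> sph_harm N"
  by (rule sph_harm_hp[OF hp_zero]) (auto simp: hp_harm_zero)

lemma sph_harm_add: fixes g :: "real^'n \<Rightarrow> real"
  assumes "g \<in> sph_harm N" "h \<in> sph_harm N" shows "(\<lambda>\<xi>. g \<xi> + h \<xi>) \<in> sph_harm N"
proof -
  from sph_harm_hp'[OF assms(1)] sph_harm_hp'[OF assms(2)] obtain G H where
    G: "hp N G" "\<forall>x. laplacian G x = 0" "\<forall>\<xi>\<in>unit_sph. g \<xi> = G \<xi>" and
    H: "hp N H" "\<forall>x. laplacian H x = 0" "\<forall>\<xi>\<in>unit_sph. h \<xi> = H \<xi>" by blast
  show ?thesis
  proof (rule sph_harm_hp)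
    show "hp N (\<lambda>x. G x + H x)" by (intro hp_add G(1) H(1))
    show "\<forall>x. laplacian (\<lambda>x. G x + H x) x = 0" using lap_lin[OF G(1) H(1), of 1 1] G(2) H(2) by simp
    show "\<forall>\<xi>\<in>unit_sph. g \<xi> + h \<xi> = G \<xi> + H \<xi>" using G(3) H(3) by simp
  qed
qed

lemma sph_harm_scale: fixes g :: "real^'n \<Rightarrow> real"
  assumes "g \<in> sph_harm N" shows "(\<lambda>\<xi>. c * g \<xi>) \<in> sph_harm N"
proof -
  from sph_harm_hp'[OF assms(1)] obtain G where
    G: "hp N G" "\<forall>x. laplacian G x = 0" "\<forall>\<xi>\<in>unit_sph. g \<xi> = G \<xi>" by blast
  show ?thesis
  proof (rule sph_harm_hp)
    show "hp N (\<lambda>x. c * G x)" by (intro hp_scale G(1))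
    show "\<forall>x. laplacian (\<lambda>x. c * G x) x = 0" using lap_lin[OF G(1) G(1), of c 0] G(2) by simp
    show "\<forall>\<xi>\<in>unit_sph. c * g \<xi> = c * G \<xi>" using G(3) by simp
  qed
qed

lemma Pi_zero: "(\<lambda>_. 0) \<in> Pi_sph l"
  unfolding Pi_sph_def by (rule CollectI, rule exI[of _ "\<lambda>_ _. 0"]) (simp add: sph_harm_zero)

lemma Pi_cong: "F \<in> Pi_sph l \<Longrightarrow> (\<forall>\<xi>\<in>unit_sph. F \<xi> = G \<xi>) \<Longrightarrow> G \<in> Pi_sph l"
  unfolding Pi_sph_def by auto

lemma Pi_add: fixes F :: "real^'n \<Rightarrow> real"
  assumes "F \<in> Pi_sph l" "G \<in> Pi_sph l" shows "(\<lambda>\<xi>. F \<xi> + G \<xi>) \<in> Pi_sph l"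
proof -
  from assms obtain f g where f: "\<forall>i\<le>l. f i \<in> sph_harm i" "\<forall>\<xi>\<in>unit_sph. F \<xi> = (\<Sum>i\<le>l. f i \<xi>)"
    and g: "\<forall>i\<le>l. g i \<in> sph_harm i" "\<forall>\<xi>\<in>unit_sph. G \<xi> = (\<Sum>i\<le>l. g i \<xi>)"
    unfolding Pi_sph_def by blast
  show ?thesis unfolding Pi_sph_def
    by (rule CollectI, rule exI[of _ "\<lambda>i \<xi>. f i \<xi> + g i \<xi>"]) (simp add: f g sph_harm_add sum.distrib)
qed

lemma Pi_scale: fixes F :: "real^'n \<Rightarrow> real"
  assumes "F \<in> Pi_sph l" shows "(\<lambda>\<xi>. c * F \<xi>) \<in> Pi_sph l"
proof -
  from assms obtain f where f: "\<forall>i\<le>l. f i \<in> sph_harm i" "\<forall>\<xi>\<in>unit_sph. F \<xi> = (\<Sum>i\<le>l. f i \<xi>)"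
    unfolding Pi_sph_def by blast
  show ?thesis unfolding Pi_sph_def
    by (rule CollectI, rule exI[of _ "\<lambda>i \<xi>. c * f i \<xi>"]) (simp add: f sph_harm_scale sum_distrib_left)
qed

lemma Pi_harm: fixes h :: "real^'n \<Rightarrow> real"
  assumes "h \<in> sph_harm N" "N \<le> l" shows "h \<in> Pi_sph l"
proof -
  have "(\<Sum>i\<le>l. (if i = N then h else (\<lambda>_. 0)) \<xi>) = h \<xi>" for \<xi>
  proof -
    have "(\<Sum>i\<le>l. (if i = N then h else (\<lambda>_. 0)) \<xi>) = (\<Sum>i\<le>l. (if i = N then h \<xi> else 0))"
      by (rule sum.cong) auto
    then show ?thesis using assms(2) by simp
  qed
  then show ?thesis unfolding Pi_sph_def
    by (intro CollectI exI[of _ "\<lambda>i. if i = N then h else (\<lambda>_. 0)"])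
       (auto simp: assms sph_harm_zero)
qed

lemma Pi_sum: fixes F :: "'a \<Rightarrow> real^'n \<Rightarrow> real"
  assumes "\<And>a. a \<in> A \<Longrightarrow> F a \<in> Pi_sph l" shows "(\<lambda>\<xi>. \<Sum>a\<in>A. F a \<xi>) \<in> Pi_sph l"
proof (cases "finite A")
  case True
  then show ?thesis using assms
  proof (induction A rule: finite_induct)
    case empty then show ?case using Pi_zero by simp
  next
    case (insert a A)
    from Pi_add[OF insert.prems[of a] insert.IH] insert show ?case by simp
  qed
qed (simp add: Pi_zero)

lemma hp_Pi: fixes P :: "real^'n \<Rightarrow> real" shows "hp N P \<Longrightarrow> N \<le> l \<Longrightarrow> P \<in> Pi_sph l"
proof (induction N arbitrary: P rule: less_induct)
  case (less N)
  show ?case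
  proof (cases "N < 2")
    case True
    have "P \<in> sph_harm N" by (rule sph_harm_hp[OF less.prems(1)]) (auto simp: lap_small[OF less.prems(1) True])
    then show ?thesis using Pi_harm less.prems(2) by blast
  next
    case False
    from fischer[OF less.prems(1)] False obtain H Q where
      HQ: "hp N H" "\<forall>x. laplacian H x = 0" "hp (N-2) Q" "\<forall>x. P x = H x + r2 x * Q x" by auto
    have "H \<in> Pi_sph l" using Pi_harm[OF sph_harm_hp[OF HQ(1) HQ(2)] less.prems(2)] by simp
    moreover have "Q \<in> Pi_sph l" using less.IH[OF _ HQ(3)] False less.prems(2) by simp
    ultimately have "(\<lambda>\<xi>. H \<xi> + Q \<xi>) \<in> Pi_sph l" by (rule Pi_add)
    then show ?thesis by (rule Pi_cong) (simp add: HQ(4) r2_sph)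
  qed
qed

definition polyle :: "nat \<Rightarrow> (real^'n::finite \<Rightarrow> real) \<Rightarrow> bool" where
  "polyle N F \<longleftrightarrow> (\<exists>G. (\<forall>i\<le>N. hp i (G i)) \<and> (\<forall>x. F x = (\<Sum>i\<le>N. G i x)))"

lemma polyle_Pi: "polyle N F \<Longrightarrow> N \<le> l \<Longrightarrow> F \<in> Pi_sph l"
proof -
  assume "polyle N F" "N \<le> l"
  then obtain G where G: "\<forall>i\<le>N. hp i (G i)" "\<forall>x. F x = (\<Sum>i\<le>N. G i x)" unfolding polyle_def by blast
  have "(\<lambda>\<xi>. \<Sum>i\<le>N. G i \<xi>) \<in> Pi_sph l"
  proof (rule Pi_sum)
    fix i assume "i \<in> {..N}"
    then show "G i \<in> Pi_sph l" using G(1) \<open>N \<le> l\<close> by (intro hp_Pi[of i]) auto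
  qed
  then show ?thesis by (rule Pi_cong) (simp add: G(2))
qed

lemma polyle_hp: assumes "hp i F" "i \<le> N" shows "polyle N F"
proof -
  have "(\<Sum>k\<le>N. (if k = i then F else (\<lambda>_. 0)) x) = F x" for x
  proof -
    have "(\<Sum>k\<le>N. (if k = i then F else (\<lambda>_. 0)) x) = (\<Sum>k\<le>N. (if k = i then F x else 0))"
      by (rule sum.cong) auto
    then show ?thesis using assms(2) by simp
  qed
  then show ?thesis unfolding polyle_def
    by (intro exI[of _ "\<lambda>k. if k = i then F else (\<lambda>_. 0)"]) (auto simp: assms hp_zero)
qed

lemma polyle_add: assumes "polyle N F" "polyle N G" shows "polyle N (\<lambda>x. F x + G x)"
proof -
  from assms obtain f g where f: "\<forall>i\<le>N. hp i (f i)" "\<forall>x. F x = (\<Sum>i\<le>N. f i x)"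
    and g: "\<forall>i\<le>N. hp i (g i)" "\<forall>x. G x = (\<Sum>i\<le>N. g i x)" unfolding polyle_def by blast
  show ?thesis unfolding polyle_def
    by (rule exI[of _ "\<lambda>i x. f i x + g i x"]) (simp add: f g hp_add sum.distrib)
qed

lemma polyle_scale: assumes "polyle N F" shows "polyle N (\<lambda>x. c * F x)"
proof -
  from assms obtain f where f: "\<forall>i\<le>N. hp i (f i)" "\<forall>x. F x = (\<Sum>i\<le>N. f i x)"
    unfolding polyle_def by blast
  show ?thesis unfolding polyle_def
    by (rule exI[of _ "\<lambda>i x. c * f i x"]) (simp add: f hp_scale sum_distrib_left)
qed

lemma polyle_zero: "polyle N (\<lambda>x. 0)"
  using polyle_hp[OF hp_zero[of 0]] by simp

lemma polyle_sum: assumes "\<And>a. a \<in> A \<Longrightarrow> polyle N (F a)" shows "polyle N (\<lambda>x. \<Sum>a\<in>A. F a x)"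
proof (cases "finite A")
  case True
  then show ?thesis using assms
  proof (induction A rule: finite_induct)
    case empty then show ?case using polyle_zero by simp
  next
    case (insert a A)
    from polyle_add[OF insert.prems[of a] insert.IH] insert show ?case by simp
  qed
qed (simp add: polyle_zero)

lemma polyle_mono: assumes "polyle N F" "N \<le> M" shows "polyle M F"
proof -
  from assms obtain f where f: "\<forall>i\<le>N. hp i (f i)" "\<forall>x. F x = (\<Sum>i\<le>N. f i x)"
    unfolding polyle_def by blast
  have "polyle M (\<lambda>x. \<Sum>i\<le>N. f i x)"
  proof (rule polyle_sum)
    fix i assume "i \<in> {..N}"
    then show "polyle M (f i)" using f(1) assms(2) by (intro polyle_hp[of i]) auto
  qed
  then show ?thesis using f(2) by (simp add: polyle_def)
qed

lemma polyle_mult: assumes "hp a L" "polyle N F" shows "polyle (N + a) (\<lambda>x. L x * F x)"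
proof -
  from assms obtain f where f: "\<forall>i\<le>N. hp i (f i)" "\<forall>x. F x = (\<Sum>i\<le>N. f i x)"
    unfolding polyle_def by blast
  have "polyle (N + a) (\<lambda>x. \<Sum>i\<le>N. L x * f i x)"
  proof (rule polyle_sum)
    fix i assume "i \<in> {..N}"
    then show "polyle (N + a) (\<lambda>x. L x * f i x)" using hp_mult[OF assms(1), of i "f i"] f(1)
      by (intro polyle_hp) auto
  qed
  then show ?thesis using f(2) by (simp add: polyle_def sum_distrib_left)
qed

definition Cr :: "real \<Rightarrow> real \<Rightarrow> real" where
  "Cr r \<theta> = (\<Sum>n. r^(2*n+1) * cos ((2 * real n + 1) * \<theta>) / (2 * real n + 1)^2)"

definition Ur :: "real \<Rightarrow> real \<Rightarrow> real" where
  "Ur r \<theta> = (\<Sum>n. r^(2*n+1) * sin ((2 * real n + 1) * \<theta>) / (2 * real n + 1))"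

lemma summable_a: "summable (\<lambda>n. 1 / (2 * real n + 1)^2)"
proof (rule summable_comparison_test)
  show "summable (\<lambda>n. inverse (real n ^ 2))" by (rule inverse_power_summable) simp
  have "norm (1 / (2 * real n + 1)^2) \<le> inverse (real n ^ 2)" if "n \<ge> 1" for n
  proof -
    have "(real n)^2 \<le> (2*real n+1)^2" by (rule power_mono) auto
    then have "1 / (2 * real n + 1)^2 \<le> 1 / (real n)^2"
      by (rule divide_left_mono) (use that in auto)
    then show ?thesis by (simp add: inverse_eq_divide)
  qed
  then show "\<exists>N. \<forall>n\<ge>N. norm (1 / (2 * real n + 1)^2) \<le> inverse (real n ^ 2)" by blast
qed

lemma term_bound: "0 \<le> r \<Longrightarrow> r \<le> 1 \<Longrightarrow> \<bar>r^(2*n+1) * c / (2 * real n + 1)^2\<bar> \<le> 1 / (2 * real n + 1)^2"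
  if "\<bar>c\<bar> \<le> 1" for c :: real
proof -
  assume r: "0 \<le> r" "r \<le> 1"
  have "r^(2*n+1) * \<bar>c\<bar> \<le> 1" using r that
    by (intro mult_le_one power_le_one) auto
  then have "\<bar>r^(2*n+1) * c\<bar> \<le> 1" using r by (simp add: abs_mult)
  then have "\<bar>r^(2*n+1) * c\<bar> / (2 * real n + 1)^2 \<le> 1 / (2 * real n + 1)^2"
    by (rule divide_right_mono) simp
  then show ?thesis by (simp add: abs_mult)
qed

lemma Ur_term_bound: assumes r: "0 \<le> r" "r \<le> 1"
  shows "\<bar>r^(2*n+1) * sin ((2 * real n + 1) * t) / (2 * real n + 1)\<bar> \<le> r^n"
proof -
  have "r^(2*n+1) * \<bar>sin ((2 * real n + 1) * t)\<bar> \<le> r^(2*n+1) * 1"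
    using r by (intro mult_left_mono) auto
  then have "\<bar>r^(2*n+1) * sin ((2 * real n + 1) * t)\<bar> \<le> r^(2*n+1)"
    using r by (simp add: abs_mult)
  also have "\<dots> \<le> r^n" using r by (intro power_decreasing) auto
  finally have A: "\<bar>r^(2*n+1) * sin ((2 * real n + 1) * t)\<bar> \<le> r^n" .
  have "\<bar>r^(2*n+1) * sin ((2 * real n + 1) * t)\<bar> / (2 * real n + 1) \<le> \<bar>r^(2*n+1) * sin ((2 * real n + 1) * t)\<bar> / 1"
    by (rule divide_left_mono) auto
  with A show ?thesis by (simp add: abs_mult)
qed

lemma d_cos: "((\<lambda>t. c * cos (k * t)) has_real_derivative c * (- sin (k*t) * k)) (at t)"
  by (auto intro!: derivative_eq_intros)

lemma d_sin: "((\<lambda>t. c * sin (k * t)) has_real_derivative c * (cos (k*t) * k)) (at t)"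
  by (auto intro!: derivative_eq_intros)

lemma Cr_deriv:
  assumes r: "0 \<le> r" "r < 1"
  shows "((\<lambda>\<theta>. Cr r \<theta>) has_real_derivative - Ur r \<theta>) (at \<theta>)"
proof -
  define f where "f n t = (r^(2*n+1) / (2 * real n + 1)^2) * cos ((2 * real n + 1) * t)" for n t
  define f' where "f' n t = - (r^(2*n+1) * sin ((2 * real n + 1) * t) / (2 * real n + 1))" for n t
  have d: "(f n has_field_derivative f' n t) (at t within UNIV)" for n t
  proof -
    have "(f n has_field_derivative (r^(2*n+1) / (2 * real n + 1)^2) * (- sin ((2 * real n + 1) * t) * (2 * real n + 1))) (at t)"
      unfolding f_def by (rule d_cos)
    moreover have "(r^(2*n+1) / (2 * real n + 1)^2) * (- sin ((2 * real n + 1) * t) * (2 * real n + 1)) = f' n t"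
    proof -
      have "(2 * real n + 1) \<noteq> 0" by (simp add: add_pos_nonneg)
      then show ?thesis unfolding f'_def by (simp add: power2_eq_square)
    qed
    ultimately show ?thesis by simp
  qed
  have u: "uniformly_convergent_on UNIV (\<lambda>N t. \<Sum>i<N. f' i t)"
  proof (rule Weierstrass_m_test')
    show "summable (\<lambda>n. r^n)" using r by (intro summable_geometric) simp
    fix n t
    have "r^(2*n+1) * \<bar>sin ((2 * real n + 1) * t)\<bar> \<le> r^(2*n+1) * 1"
      using r by (intro mult_left_mono) auto
    then have "\<bar>r^(2*n+1) * sin ((2 * real n + 1) * t)\<bar> \<le> r^(2*n+1)"
      using r by (simp add: abs_mult)
    also have "\<dots> \<le> r^n" using r by (intro power_decreasing) auto
    finally have A: "\<bar>r^(2*n+1) * sin ((2 * real n + 1) * t)\<bar> \<le> r^n" .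
    have "\<bar>r^(2*n+1) * sin ((2 * real n + 1) * t)\<bar> / (2 * real n + 1) \<le> \<bar>r^(2*n+1) * sin ((2 * real n + 1) * t)\<bar> / 1"
      by (rule divide_left_mono) auto
    with A show "norm (f' n t) \<le> r^n" unfolding f'_def by (simp add: abs_mult)
  qed
  have s: "summable (\<lambda>n. f n 0)"
  proof (rule summable_comparison_test[OF _ summable_a])
    show "\<exists>N. \<forall>n\<ge>N. norm (f n 0) \<le> 1 / (2 * real n + 1)^2"
      using term_bound[of 1 r] r unfolding f_def by auto
  qed
  from has_field_derivative_series'(2)[OF convex_UNIV d u _ s] 
  have "((\<lambda>x. \<Sum>n. f n x) has_field_derivative (\<Sum>n. f' n \<theta>)) (at \<theta>)" by simp
  moreover have "(\<lambda>x. \<Sum>n. f n x) = (\<lambda>\<theta>. Cr r \<theta>)" by (simp add: f_def Cr_def fun_eq_iff mult.commute)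
  moreover have "(\<Sum>n. f' n \<theta>) = - Ur r \<theta>"
  proof -
    have "summable (\<lambda>n. r^(2*n+1) * sin ((2 * real n + 1) * \<theta>) / (2 * real n + 1))"
    proof (rule summable_comparison_test)
      show "summable (\<lambda>n. r^n)" using r by (intro summable_geometric) simp
      show "\<exists>N. \<forall>n\<ge>N. norm (r^(2*n+1) * sin ((2 * real n + 1) * \<theta>) / (2 * real n + 1)) \<le> r^n"
        using Ur_term_bound[of r] r by auto
    qed
    then show ?thesis unfolding f'_def Ur_def by (simp add: suminf_minus)
  qed
  ultimately show ?thesis by simp
qed


lemma Ur_Arg: assumes r: "0 \<le> r" "r < 1"
  shows "Ur r u = (Arg (1 + rcis r u) - Arg (1 - rcis r u)) / 2"
proof -
  define z where "z = rcis r u"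
  have nz: "cmod z < 1" using r by (simp add: z_def)
  have s1: "(\<lambda>n. - ((-z)^n) / of_nat n) sums ln (1 + z)" by (rule Ln_series'[OF nz])
  have s2: "(\<lambda>n. - ((-(-z))^n) / of_nat n) sums ln (1 + -z)" by (rule Ln_series') (use nz in simp)
  define g where "g n = - ((-z)^n) / of_nat n - (- ((-(-z))^n) / of_nat n)" for n
  have s3: "g sums (ln (1 + z) - ln (1 + -z))" unfolding g_def by (rule sums_diff[OF s1 s2])
  have g_even: "g n = 0" if "even n" for n using that by (simp add: g_def power_minus_even)
  have g_odd: "g (2*n+1) = 2 * z^(2*n+1) / of_nat (2*n+1)" for n
  proof -
    have "odd (2*n+1)" by simp
    then have "(-z)^(2*n+1) = - (z^(2*n+1))" by (rule power_minus_odd)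
    then show ?thesis by (simp add: g_def)
  qed
  have sm: "strict_mono (\<lambda>n::nat. 2*n+1)" by (auto simp: strict_mono_def)
  have "(\<lambda>n. g (2*n+1)) sums (ln (1 + z) - ln (1 + -z))"
  proof (subst sums_mono_reindex[OF sm])
    show "g n = 0" if "n \<notin> range (\<lambda>n::nat. 2*n+1)" for n
    proof -
      have "even n"
      proof (rule ccontr)
        assume "odd n"
        then have "n = 2 * (n div 2) + 1" by simp
        then show False using that by blast
      qed
      then show ?thesis by (rule g_even)
    qed
  qed (fact s3)
  then have "(\<lambda>n. Im (g (2*n+1))) sums Im (ln (1 + z) - ln (1 + -z))"
    by (simp add: sums_complex_iff)
  moreover have "Im (g (2*n+1)) = 2 * (r^(2*n+1) * sin ((2 * real n + 1) * u) / (2 * real n + 1))" for n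
  proof -
    have "z^(2*n+1) = rcis (r^(2*n+1)) (real (2*n+1) * u)" unfolding z_def by (rule DeMoivre2)
    then show ?thesis unfolding g_odd by (simp add: algebra_simps)
  qed
  moreover have "1 + z \<noteq> 0"
  proof
    assume "1 + z = 0" then have "z = -1" by (simp add: add_eq_0_iff)
    with nz show False by simp
  qed
  moreover have "1 + -z \<noteq> 0"
  proof
    assume "1 + -z = 0" then have "z = 1" by simp
    with nz show False by simp
  qed
  ultimately have "(\<lambda>n. 2 * (r^(2*n+1) * sin ((2 * real n + 1) * u) / (2 * real n + 1))) sums (Arg (1 + z) - Arg (1 - z))"
    by (simp add: Arg_eq_Im_Ln)
  from sums_divide[OF this, of 2]
  have X: "(\<lambda>n. 2 * (r^(2*n+1) * sin ((2 * real n + 1) * u) / (2 * real n + 1)) / 2) sums ((Arg (1 + z) - Arg (1 - z)) / 2)" .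
  have "(\<lambda>n. 2 * (r^(2*n+1) * sin ((2 * real n + 1) * u) / (2 * real n + 1)) / 2) =
     (\<lambda>n. r^(2*n+1) * sin ((2 * real n + 1) * u) / (2 * real n + 1))"
    by (rule ext, rule nonzero_mult_div_cancel_left) simp
  with X have "(\<lambda>n. r^(2*n+1) * sin ((2 * real n + 1) * u) / (2 * real n + 1)) sums ((Arg (1 + z) - Arg (1 - z)) / 2)"
    by simp
  then show ?thesis unfolding Ur_def z_def by (rule sums_unique[symmetric])
qed

lemma Ur_abs: assumes "0 \<le> r" "r < 1" shows "\<bar>Ur r u\<bar> \<le> pi"
  using Ur_Arg[OF assms, of u] Arg_bounded[of "1 + rcis r u"] Arg_bounded[of "1 - rcis r u"] by auto

definition rk :: "nat \<Rightarrow> real" where "rk k = 1 - inverse (real (Suc k)) / 2"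

lemma rk_bounds: "0 \<le> rk k" "rk k < 1"
proof -
  have "inverse (real (Suc k)) \<le> 1" by (simp add: inverse_le_1_iff)
  moreover have "0 < inverse (real (Suc k))" by simp
  ultimately show "0 \<le> rk k" "rk k < 1" unfolding rk_def by auto
qed

lemma rk_lim: "rk \<longlonglongrightarrow> 1"
proof -
  have "(\<lambda>k. 1 - inverse (real (Suc k)) / 2) \<longlonglongrightarrow> 1 - 0 / 2"
    by (intro tendsto_intros LIMSEQ_inverse_real_of_nat) simp
  then show ?thesis by (simp add: rk_def[abs_def])
qed

lemma Arg_plus: assumes "0 < u" "u < pi" shows "Arg (1 + cis u) = u / 2"
proof (rule Arg_unique')
  show "0 < 2 * cos (u/2)" using assms by (simp add: cos_gt_zero_pi)
  show "u / 2 \<in> {-pi<..pi}" using assms by auto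
  have "cos u = cos (2 * (u/2))" by simp
  then have c: "cos u = 2 * cos (u/2) ^ 2 - 1" by (simp only: cos_double_cos)
  have "sin u = sin (2 * (u/2))" by simp
  then have s: "sin u = 2 * sin (u/2) * cos (u/2)" by (simp only: sin_double)
  show "1 + cis u = rcis (2 * cos (u/2)) (u/2)"
    by (simp add: complex_eq_iff c s power2_eq_square)
qed

lemma Arg_minus: assumes "0 < u" "u < pi" shows "Arg (1 - cis u) = u / 2 - pi / 2"
proof (rule Arg_unique')
  show "0 < 2 * sin (u/2)" using assms by (simp add: sin_gt_zero)
  show "u / 2 - pi / 2 \<in> {-pi<..pi}" using assms by auto
  have "cos u = cos (2 * (u/2))" by simp
  then have c: "cos u = 1 - 2 * sin (u/2) ^ 2" by (simp only: cos_double_sin)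
  have "sin u = sin (2 * (u/2))" by simp
  then have s: "sin u = 2 * sin (u/2) * cos (u/2)" by (simp only: sin_double)
  have c2: "cos (u/2 - pi/2) = sin (u/2)" by (simp add: cos_diff)
  have s2: "sin (u/2 - pi/2) = - cos (u/2)" by (simp add: sin_diff)
  show "1 - cis u = rcis (2 * sin (u/2)) (u/2 - pi/2)"
    by (simp add: complex_eq_iff c s c2 s2 power2_eq_square)
qed

lemma Ur_lim: assumes "0 < u" "u < pi" shows "(\<lambda>k. Ur (rk k) u) \<longlonglongrightarrow> pi / 4"
proof -
  have z: "(\<lambda>k. rcis (rk k) u) \<longlonglongrightarrow> cis u"
  proof -
    have "(\<lambda>k. complex_of_real (rk k) * cis u) \<longlonglongrightarrow> complex_of_real 1 * cis u"
      by (intro tendsto_intros rk_lim)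
    then show ?thesis by (simp add: rcis_def)
  qed
  have "cos pi < cos u" using assms by (intro cos_monotone_0_pi) auto
  then have p1: "1 + cis u \<notin> \<real>\<^sub>\<le>\<^sub>0" by (auto simp: complex_nonpos_Reals_iff)
  have "cos u < cos 0" using assms by (intro cos_monotone_0_pi) auto
  then have p2: "1 - cis u \<notin> \<real>\<^sub>\<le>\<^sub>0" by (auto simp: complex_nonpos_Reals_iff)
  have a1: "(\<lambda>k. Arg (1 + rcis (rk k) u)) \<longlonglongrightarrow> Arg (1 + cis u)"
    by (rule isCont_tendsto_compose[OF continuous_at_Arg[OF p1]]) (intro tendsto_intros z)
  have a2: "(\<lambda>k. Arg (1 - rcis (rk k) u)) \<longlonglongrightarrow> Arg (1 - cis u)"
    by (rule isCont_tendsto_compose[OF continuous_at_Arg[OF p2]]) (intro tendsto_intros z)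
  have L: "(\<lambda>k. (Arg (1 + rcis (rk k) u) - Arg (1 - rcis (rk k) u)) / 2) \<longlonglongrightarrow> (Arg (1 + cis u) - Arg (1 - cis u)) / 2"
    by (rule tendsto_divide[OF tendsto_diff[OF a1 a2] tendsto_const]) simp
  have v: "(Arg (1 + cis u) - Arg (1 - cis u)) / 2 = pi / 4"
    using Arg_plus[OF assms] Arg_minus[OF assms] by simp
  have e: "(\<lambda>k. Ur (rk k) u) = (\<lambda>k. (Arg (1 + rcis (rk k) u) - Arg (1 - rcis (rk k) u)) / 2)"
    by (rule ext) (rule Ur_Arg[OF rk_bounds])
  show ?thesis using L unfolding e v .
qed

lemma Cr_cont_r: "continuous_on {0..1} (\<lambda>r. Cr r \<theta>)"
proof (rule uniform_limit_theorem)
  let ?f = "\<lambda>i r. r^(2*i+1) * cos ((2 * real i + 1) * \<theta>) / (2 * real i + 1)^2"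
  show "uniform_limit {0..1} (\<lambda>n r. \<Sum>i<n. ?f i r) (\<lambda>r. Cr r \<theta>) sequentially"
    unfolding Cr_def
  proof (rule Weierstrass_m_test[OF _ summable_a])
    fix n and r :: real assume "r \<in> {0..1}"
    then show "norm (?f n r) \<le> 1 / (2 * real n + 1)^2" using term_bound[of _ r n] by auto
  qed
  show "\<forall>\<^sub>F n in sequentially. continuous_on {0..1} (\<lambda>r. \<Sum>i<n. ?f i r)"
    by (intro always_eventually allI continuous_intros) auto
qed simp

lemma Cr1_cont: "continuous_on UNIV (\<lambda>\<theta>. Cr 1 \<theta>)"
proof (rule uniform_limit_theorem)
  let ?f = "\<lambda>i \<theta>. (1::real)^(2*i+1) * cos ((2 * real i + 1) * \<theta>) / (2 * real i + 1)^2"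
  show "uniform_limit UNIV (\<lambda>n \<theta>. \<Sum>i<n. ?f i \<theta>) (\<lambda>\<theta>. Cr 1 \<theta>) sequentially"
    unfolding Cr_def
  proof (rule Weierstrass_m_test[OF _ summable_a])
    fix n and \<theta> :: real
    show "norm (?f n \<theta>) \<le> 1 / (2 * real n + 1)^2" using term_bound[of _ 1 n] by auto
  qed
  show "\<forall>\<^sub>F n in sequentially. continuous_on UNIV (\<lambda>\<theta>. \<Sum>i<n. ?f i \<theta>)"
    by (intro always_eventually allI continuous_intros) auto
qed simp

lemma C_diff: assumes "0 < a" "a \<le> b" "b < pi"
  shows "Cr 1 b - Cr 1 a = - (pi/4) * (b - a)"
proof -
  have I: "((\<lambda>u. - Ur (rk k) u) has_integral (Cr (rk k) b - Cr (rk k) a)) {a..b}" for k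
  proof (rule fundamental_theorem_of_calculus[OF assms(2)])
    fix x assume "x \<in> {a..b}"
    have "((\<lambda>\<theta>. Cr (rk k) \<theta>) has_real_derivative - Ur (rk k) x) (at x within {a..b})"
      by (rule has_field_derivative_at_within, rule Cr_deriv[OF rk_bounds])
    then show "((\<lambda>\<theta>. Cr (rk k) \<theta>) has_vector_derivative - Ur (rk k) x) (at x within {a..b})"
      by (simp add: has_real_derivative_iff_has_vector_derivative)
  qed
  have dc: "(\<lambda>k. integral {a..b} (\<lambda>u. - Ur (rk k) u)) \<longlonglongrightarrow> integral {a..b} (\<lambda>u. - (pi/4))"
  proof (rule dominated_convergence(2))
    show "(\<lambda>u. - Ur (rk k) u) integrable_on {a..b}" for k using I[of k] by blast
    show "(\<lambda>u. pi) integrable_on {a..b}" by (rule integrable_const_ivl)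
    show "norm (- Ur (rk k) u) \<le> pi" if "u \<in> {a..b}" for k u using Ur_abs[OF rk_bounds] by simp
    show "(\<lambda>k. - Ur (rk k) u) \<longlonglongrightarrow> - (pi/4)" if "u \<in> {a..b}" for u
      using that assms by (intro tendsto_minus Ur_lim) auto
  qed
  have e1: "integral {a..b} (\<lambda>u. - Ur (rk k) u) = Cr (rk k) b - Cr (rk k) a" for k
    using I[of k] by (rule integral_unique)
  have e2: "integral {a..b} (\<lambda>u. - (pi/4)) = - (pi/4) * (b - a)" using assms(2) by simp
  from dc have L1: "(\<lambda>k. Cr (rk k) b - Cr (rk k) a) \<longlonglongrightarrow> - (pi/4) * (b - a)" by (simp only: e1 e2)
  have cb: "(\<lambda>k. Cr (rk k) c) \<longlonglongrightarrow> Cr 1 c" for c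
    by (rule continuous_on_tendsto_compose[OF Cr_cont_r rk_lim]) (auto intro!: always_eventually simp: rk_bounds less_imp_le)
  have L2: "(\<lambda>k. Cr (rk k) b - Cr (rk k) a) \<longlonglongrightarrow> Cr 1 b - Cr 1 a"
    by (intro tendsto_diff cb)
  from LIMSEQ_unique[OF L2 L1] show ?thesis .
qed

lemma C_half: "Cr 1 (pi/2) = 0"
proof -
  have "cos ((2 * real n + 1) * (pi / 2)) = 0" for n
  proof -
    have "odd (2*n+1)" by simp
    then have "cos (real (2*n+1) * (pi/2)) = 0" by (subst cos_zero_iff) blast
    moreover have "real (2*n+1) * (pi/2) = (2 * real n + 1) * (pi / 2)" by simp
    ultimately show ?thesis by metis
  qed
  then show ?thesis unfolding Cr_def by simp
qed

lemma C_open: assumes "0 < \<theta>" "\<theta> < pi" shows "Cr 1 \<theta> = pi/4 * (pi/2 - \<theta>)"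
proof (cases "\<theta> \<le> pi/2")
  case True
  from C_diff[of \<theta> "pi/2"] True assms show ?thesis by (simp add: C_half algebra_simps)
next
  case False
  from C_diff[of "pi/2" \<theta>] False assms show ?thesis by (simp add: C_half algebra_simps)
qed

lemma C_closed: assumes "0 \<le> \<theta>" "\<theta> \<le> pi" shows "Cr 1 \<theta> = pi/4 * (pi/2 - \<theta>)"
proof -
  let ?g = "\<lambda>\<theta>. Cr 1 \<theta> - pi/4 * (pi/2 - \<theta>)"
  have c: "continuous_on (closure {0<..<pi}) ?g"
    by (intro continuous_intros continuous_on_subset[OF Cr1_cont]) auto
  have m: "\<theta> \<in> closure {0<..<pi}" using assms by simp
  have "?g \<theta> \<le> 0" by (rule continuous_le_on_closure[OF c m]) (simp add: C_open)
  moreover have "?g \<theta> \<ge> 0" by (rule continuous_ge_on_closure[OF c m]) (simp add: C_open)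
  ultimately show ?thesis by simp
qed

lemma tail_bound: assumes "N \<ge> 1"
  shows "summable (\<lambda>n. 1 / (2 * real (n + N) + 1)^2)" "(\<Sum>n. 1 / (2 * real (n + N) + 1)^2) \<le> 1 / (4 * real N)"
proof -
  define F where "F n = 1 / (4 * real (n + N))" for n
  have "(\<lambda>n. 1 / real (n + N)) \<longlonglongrightarrow> 0"
    by (rule LIMSEQ_ignore_initial_segment[OF lim_1_over_n])
  then have "(\<lambda>n. (1/4) * (1 / real (n + N))) \<longlonglongrightarrow> (1/4) * 0" by (intro tendsto_intros)
  then have "F \<longlonglongrightarrow> 0" by (simp add: F_def[abs_def])
  then have tel: "(\<lambda>n. F n - F (Suc n)) sums (F 0 - 0)" by (rule telescope_sums')
  have le: "1 / (2 * real (n + N) + 1)^2 \<le> F n - F (Suc n)" for n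
  proof -
    define m where "m = real (n + N)"
    have m1: "m \<ge> 1" using assms by (simp add: m_def)
    have f1: "F n = 1 / (4 * m)" "F (Suc n) = 1 / (4 * (m + 1))" by (simp_all add: F_def m_def)
    have "F n - F (Suc n) = 1 / (4 * m * (m + 1))" unfolding f1 using m1 by (simp add: field_simps)
    moreover have "4 * m * (m + 1) \<le> (2 * m + 1)^2" by (simp add: power2_eq_square algebra_simps)
    then have "1 / (2 * m + 1)^2 \<le> 1 / (4 * m * (m + 1))" using m1 by (intro divide_left_mono) auto
    ultimately show ?thesis by (simp add: m_def)
  qed
  have sg: "summable (\<lambda>n. F n - F (Suc n))" using tel by (rule sums_summable)
  show s: "summable (\<lambda>n. 1 / (2 * real (n + N) + 1)^2)"
    by (rule summable_comparison_test[OF _ sg]) (use le in auto)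
  have "(\<Sum>n. 1 / (2 * real (n + N) + 1)^2) \<le> (\<Sum>n. F n - F (Suc n))"
    by (rule suminf_le[OF le s sg])
  also have "\<dots> = F 0" using tel by (simp add: sums_iff)
  finally show "(\<Sum>n. 1 / (2 * real (n + N) + 1)^2) \<le> 1 / (4 * real N)" by (simp add: F_def)
qed

lemma arcsin_approx: assumes t: "-1 \<le> t" "t \<le> 1" and N: "N \<ge> 1"
  shows "\<bar>arcsin t - (4/pi) * (\<Sum>n<N. cos ((2 * real n + 1) * arccos t) / (2 * real n + 1)^2)\<bar> \<le> 1 / real N"
proof -
  define \<theta> where "\<theta> = arccos t"
  have th: "0 \<le> \<theta>" "\<theta> \<le> pi" unfolding \<theta>_def using t by (auto intro: arccos_lbound arccos_ubound)
  define T where "T n = cos ((2 * real n + 1) * \<theta>) / (2 * real n + 1)^2" for n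
  have sT: "summable T"
    by (rule summable_comparison_test[OF _ summable_a]) (use term_bound[of _ 1] in \<open>auto simp: T_def\<close>)
  have CT: "Cr 1 \<theta> = suminf T" by (simp add: Cr_def T_def[abs_def])
  have as: "arcsin t = pi/2 - \<theta>" unfolding \<theta>_def using t by (rule arcsin_arccos_eq)
  have split: "suminf T = (\<Sum>n. T (n + N)) + (\<Sum>n<N. T n)" by (rule suminf_split_initial_segment[OF sT])
  have "arcsin t - (4/pi) * (\<Sum>n<N. T n) = (4/pi) * (\<Sum>n. T (n + N))"
  proof -
    have e1: "suminf T = pi/4 * (pi/2 - \<theta>)" using C_closed[OF th] CT by simp
    have e2: "arcsin t = (4/pi) * suminf T" unfolding e1 as by (simp add: field_simps)
    show ?thesis unfolding e2 split by (simp add: algebra_simps)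
  qed
  moreover have "\<bar>\<Sum>n. T (n + N)\<bar> \<le> 1 / (4 * real N)"
  proof -
    have tb: "\<bar>T (n + N)\<bar> \<le> 1 / (2 * real (n + N) + 1)^2" for n
      using term_bound[of "cos ((2 * real (n+N) + 1) * \<theta>)" 1 "n + N"] by (simp add: T_def)
    have sa: "summable (\<lambda>n. \<bar>T (n + N)\<bar>)"
      by (rule summable_comparison_test[OF _ tail_bound(1)[OF N]]) (use tb in auto)
    have "\<bar>\<Sum>n. T (n + N)\<bar> \<le> (\<Sum>n. \<bar>T (n + N)\<bar>)" by (rule summable_rabs[OF sa])
    also have "\<dots> \<le> (\<Sum>n. 1 / (2 * real (n + N) + 1)^2)" by (rule suminf_le[OF tb sa tail_bound(1)[OF N]])
    also have "\<dots> \<le> 1 / (4 * real N)" by (rule tail_bound(2)[OF N])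
    finally show ?thesis .
  qed
  ultimately have "\<bar>arcsin t - (4/pi) * (\<Sum>n<N. T n)\<bar> \<le> (4/pi) * (1 / (4 * real N))"
  proof -
    assume A: "arcsin t - (4/pi) * (\<Sum>n<N. T n) = (4/pi) * (\<Sum>n. T (n + N))"
      and B: "\<bar>\<Sum>n. T (n + N)\<bar> \<le> 1 / (4 * real N)"
    have "\<bar>arcsin t - (4/pi) * (\<Sum>n<N. T n)\<bar> = (4/pi) * \<bar>\<Sum>n. T (n + N)\<bar>"
      unfolding A by (simp add: abs_mult)
    also have "\<dots> \<le> (4/pi) * (1 / (4 * real N))" by (rule mult_left_mono[OF B]) simp
    finally show ?thesis .
  qed
  also have "\<dots> \<le> 1 / real N" using N pi_gt3 by (simp add: field_simps)
  finally show ?thesis by (simp add: T_def \<theta>_def)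
qed

lemma hp_cont: "hp j P \<Longrightarrow> continuous_on S P"
proof (induction arbitrary: S rule: hp.induct)
  case (hp_const c) then show ?case by (rule continuous_on_const)
next
  case (hp_var j P i) then show ?case by (intro continuous_intros) auto
next
  case (hp_add j P Q) then show ?case by (intro continuous_intros) auto
qed

lemma sph_nonempty: "unit_sph \<noteq> ({} :: (real^'n) set)"
  unfolding unit_sph_def by (simp add: sphere_eq_empty)

lemma compact_sph: "compact (unit_sph :: (real^'n) set)"
  unfolding unit_sph_def by (rule compact_sphere)

lemma Pi_cont: fixes h :: "real^'n \<Rightarrow> real"
  assumes "h \<in> Pi_sph l" shows "continuous_on unit_sph h"
proof -
  from assms obtain g where g: "\<forall>i\<le>l. g i \<in> sph_harm i" "\<forall>\<xi>\<in>unit_sph. h \<xi> = (\<Sum>i\<le>l. g i \<xi>)"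
    unfolding Pi_sph_def by blast
  have "\<exists>H. hp i H \<and> (\<forall>\<xi>\<in>unit_sph. g i \<xi> = H \<xi>)" if "i \<le> l" for i
    using sph_harm_hp'[of "g i" i] g(1) that by blast
  then obtain H where H: "\<And>i. i \<le> l \<Longrightarrow> hp i (H i) \<and> (\<forall>\<xi>\<in>unit_sph. g i \<xi> = H i \<xi>)" by metis
  have "continuous_on unit_sph (\<lambda>\<xi>. \<Sum>i\<le>l. H i \<xi>)"
  proof (intro continuous_on_sum)
    fix i assume "i \<in> {..l}"
    then have "hp i (H i)" using H by auto
    then show "continuous_on unit_sph (H i)" by (rule hp_cont)
  qed
  then show ?thesis by (rule continuous_on_eq) (use g(2) H in auto)
qed

lemma sup_ge: fixes f :: "real^'n \<Rightarrow> real"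
  assumes "continuous_on unit_sph f" "\<xi> \<in> unit_sph" shows "\<bar>f \<xi>\<bar> \<le> sup_norm_sph f"
proof -
  have "compact ((\<lambda>\<xi>. \<bar>f \<xi>\<bar>) ` unit_sph)"
    by (intro compact_continuous_image continuous_intros assms(1) compact_sph)
  then have "bdd_above ((\<lambda>\<xi>. \<bar>f \<xi>\<bar>) ` unit_sph)" by (intro bounded_imp_bdd_above compact_imp_bounded)
  then show ?thesis unfolding sup_norm_sph_def by (rule cSUP_upper[OF assms(2)])
qed

lemma sup_le: fixes f :: "real^'n \<Rightarrow> real"
  assumes "\<And>\<xi>. \<xi> \<in> unit_sph \<Longrightarrow> \<bar>f \<xi>\<bar> \<le> B" shows "sup_norm_sph f \<le> B"
  unfolding sup_norm_sph_def by (rule cSUP_least[OF sph_nonempty]) (use assms in auto)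

lemma sup_nonneg: fixes f :: "real^'n \<Rightarrow> real"
  assumes "continuous_on unit_sph f" shows "0 \<le> sup_norm_sph f"
proof -
  obtain \<xi> :: "real^'n" where "\<xi> \<in> unit_sph" using sph_nonempty by blast
  from sup_ge[OF assms this] show ?thesis by linarith
qed

lemma dist_le: fixes f :: "real^'n \<Rightarrow> real"
  assumes "continuous_on unit_sph f" "h \<in> Pi_sph l"
  shows "dist_Pi f l \<le> sup_norm_sph (\<lambda>\<xi>. f \<xi> - h \<xi>)"
  unfolding dist_Pi_def
proof (rule cINF_lower[OF _ assms(2)])
  show "bdd_below ((\<lambda>h. sup_norm_sph (\<lambda>\<xi>. f \<xi> - h \<xi>)) ` Pi_sph l)"
  proof (rule bdd_belowI)
    fix y assume "y \<in> (\<lambda>h. sup_norm_sph (\<lambda>\<xi>. f \<xi> - h \<xi>)) ` Pi_sph l"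
    then obtain h' where "h' \<in> Pi_sph l" "y = sup_norm_sph (\<lambda>\<xi>. f \<xi> - h' \<xi>)" by blast
    then show "0 \<le> y" using sup_nonneg[of "\<lambda>\<xi>. f \<xi> - h' \<xi>"] assms(1) Pi_cont
      by (auto intro: continuous_on_diff)
  qed
qed

lemma dist_le_bound: fixes f :: "real^'n \<Rightarrow> real"
  assumes "continuous_on unit_sph f" "h \<in> Pi_sph l" "\<And>\<xi>. \<xi> \<in> unit_sph \<Longrightarrow> \<bar>f \<xi> - h \<xi>\<bar> \<le> B"
  shows "dist_Pi f l \<le> B"
  using dist_le[OF assms(1,2)] sup_le[of "\<lambda>\<xi>. f \<xi> - h \<xi>" B] assms(3) by fastforce

fun cheb :: "nat \<Rightarrow> real \<Rightarrow> real" where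
  "cheb 0 t = 1"
| "cheb (Suc 0) t = t"
| "cheb (Suc (Suc n)) t = 2 * t * cheb (Suc n) t - cheb n t"

lemma cheb_cos: "cheb n (cos \<theta>) = cos (real n * \<theta>)"
proof -
  have "cheb n (cos \<theta>) = cos (real n * \<theta>) \<and> cheb (Suc n) (cos \<theta>) = cos (real (Suc n) * \<theta>)"
  proof (induction n)
    case 0 then show ?case by simp
  next
    case (Suc n)
    have "cos (real (Suc (Suc n)) * \<theta>) = cos (real (Suc n) * \<theta> + \<theta>)" by (simp add: algebra_simps)
    moreover have "cos (real n * \<theta>) = cos (real (Suc n) * \<theta> - \<theta>)" by (simp add: algebra_simps)
    moreover have "cos (a + \<theta>) = 2 * cos \<theta> * cos a - cos (a - \<theta>)" for a
      by (simp add: cos_add cos_diff)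
    ultimately have "cos (real (Suc (Suc n)) * \<theta>) = 2 * cos \<theta> * cos (real (Suc n) * \<theta>) - cos (real n * \<theta>)"
      by metis
    then show ?case using Suc by simp
  qed
  then show ?thesis by simp
qed

lemma hp_inner: "hp 1 (\<lambda>\<xi>::real^'n. x \<bullet> \<xi>)"
proof -
  have "hp 1 (\<lambda>\<xi>::real^'n. \<Sum>i\<in>UNIV. x$i * \<xi>$i)"
    by (intro hp_sum) (use hp_scale[OF hp_coord] in auto)
  then show ?thesis by (rule hp_cong) (simp add: inner_vec_def)
qed

lemma polyle_cong: "polyle N F \<Longrightarrow> (\<And>x. F x = G x) \<Longrightarrow> polyle N G"
proof -
  assume "polyle N F" "\<And>x. F x = G x"
  then have "F = G" by auto
  with \<open>polyle N F\<close> show ?thesis by simp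
qed

lemma cheb_polyle: fixes P :: "real^'n \<Rightarrow> real" assumes "hp j P"
  shows "polyle (n + j) (\<lambda>\<xi>. cheb n (x \<bullet> \<xi>) * P \<xi>)"
proof -
  have "polyle (n + j) (\<lambda>\<xi>. cheb n (x \<bullet> \<xi>) * P \<xi>) \<and> polyle (Suc n + j) (\<lambda>\<xi>. cheb (Suc n) (x \<bullet> \<xi>) * P \<xi>)"
  proof (induction n)
    case 0
    have "polyle (0 + j) P" by (rule polyle_hp[OF assms]) simp
    moreover have "polyle (j + 1) (\<lambda>\<xi>. (x \<bullet> \<xi>) * P \<xi>)" using polyle_mult[OF hp_inner \<open>polyle (0 + j) P\<close>] by simp
    ultimately show ?case by simp
  next
    case (Suc n)
    then have A: "polyle (n + j) (\<lambda>\<xi>. cheb n (x \<bullet> \<xi>) * P \<xi>)"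
      and B: "polyle (Suc n + j) (\<lambda>\<xi>. cheb (Suc n) (x \<bullet> \<xi>) * P \<xi>)" by auto
    have B': "polyle (Suc n + j + 1) (\<lambda>\<xi>. (x \<bullet> \<xi>) * (cheb (Suc n) (x \<bullet> \<xi>) * P \<xi>))"
      by (rule polyle_mult[OF hp_inner B])
    have A': "polyle (Suc n + j + 1) (\<lambda>\<xi>. cheb n (x \<bullet> \<xi>) * P \<xi>)" by (rule polyle_mono[OF A]) simp
    have "polyle (Suc n + j + 1) (\<lambda>\<xi>. 2 * ((x \<bullet> \<xi>) * (cheb (Suc n) (x \<bullet> \<xi>) * P \<xi>)) + (-1) * (cheb n (x \<bullet> \<xi>) * P \<xi>))"
      by (intro polyle_add polyle_scale A' B')
    moreover have deg: "Suc n + j + 1 = Suc (Suc n) + j" by simp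
    ultimately have "polyle (Suc (Suc n) + j) (\<lambda>\<xi>. 2 * ((x \<bullet> \<xi>) * (cheb (Suc n) (x \<bullet> \<xi>) * P \<xi>)) + (-1) * (cheb n (x \<bullet> \<xi>) * P \<xi>))"
      by metis
    then have "polyle (Suc (Suc n) + j) (\<lambda>\<xi>. cheb (Suc (Suc n)) (x \<bullet> \<xi>) * P \<xi>)"
      by (rule polyle_cong) (simp add: algebra_simps)
    with B show ?case by simp
  qed
  then show ?thesis by simp
qed

lemma inner_sph: assumes "x \<in> unit_sph" "\<xi> \<in> unit_sph" shows "-1 \<le> x \<bullet> \<xi>" "x \<bullet> \<xi> \<le> 1"
proof -
  have "norm x = 1" "norm \<xi> = 1" using assms by (auto simp: unit_sph_def)
  then have "\<bar>x \<bullet> \<xi>\<bar> \<le> 1" using Cauchy_Schwarz_ineq2[of x \<xi>] by simp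
  then show "-1 \<le> x \<bullet> \<xi>" "x \<bullet> \<xi> \<le> 1" by auto
qed

lemma K_bounds: assumes "-1 \<le> s" "s \<le> 1"
  shows "0 \<le> (s + 1) * (pi - arccos s) / (4 * pi)" "(s + 1) * (pi - arccos s) / (4 * pi) \<le> 1/2"
proof -
  have a: "0 \<le> arccos s" "arccos s \<le> pi" using assms by (auto intro: arccos_lbound arccos_ubound)
  have p: "0 \<le> (s + 1) * (pi - arccos s)" using assms a by simp
  then show "0 \<le> (s + 1) * (pi - arccos s) / (4 * pi)" by simp
  have "(s + 1) * (pi - arccos s) \<le> 2 * pi" using assms a by (intro mult_mono) auto
  then show "(s + 1) * (pi - arccos s) / (4 * pi) \<le> 1/2" by (simp add: field_simps)
qed

lemma K_approx: assumes s: "-1 \<le> s" "s \<le> 1" and N: "N \<ge> 1"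
  shows "\<bar>(s + 1) * (pi - arccos s) / (4 * pi) -
          (s + 1) * (pi/2 + (4/pi) * (\<Sum>n<N. cheb (2*n+1) s / (2 * real n + 1)^2)) / (4 * pi)\<bar> \<le> 1 / real N"
proof -
  define E where "E = arcsin s - (4/pi) * (\<Sum>n<N. cos ((2 * real n + 1) * arccos s) / (2 * real n + 1)^2)"
  have E: "\<bar>E\<bar> \<le> 1 / real N" unfolding E_def by (rule arcsin_approx[OF s N])
  have ch: "cheb (2*n+1) s = cos ((2 * real n + 1) * arccos s)" for n
  proof -
    have "cheb (2*n+1) s = cheb (2*n+1) (cos (arccos s))" using s by (simp add: cos_arccos)
    also have "\<dots> = cos (real (2*n+1) * arccos s)" by (rule cheb_cos)
    also have "real (2*n+1) = 2 * real n + 1" by simp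
    finally show ?thesis .
  qed
  have pa: "pi - arccos s = pi/2 + arcsin s" using arcsin_arccos_eq[OF s] by simp
  have "(s + 1) * (pi - arccos s) / (4 * pi) -
          (s + 1) * (pi/2 + (4/pi) * (\<Sum>n<N. cheb (2*n+1) s / (2 * real n + 1)^2)) / (4 * pi)
        = (s + 1) * ((pi - arccos s) - (pi/2 + (4/pi) * (\<Sum>n<N. cheb (2*n+1) s / (2 * real n + 1)^2))) / (4 * pi)"
  proof -
    have gen: "\<And>a b d c::real. a * b / c - a * d / c = a * (b - d) / c"
      by (simp add: diff_divide_distrib right_diff_distrib)
    show ?thesis by (rule gen)
  qed
  also have "(pi - arccos s) - (pi/2 + (4/pi) * (\<Sum>n<N. cheb (2*n+1) s / (2 * real n + 1)^2)) = E"
    unfolding pa E_def ch by simp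
  finally have eq: "(s + 1) * (pi - arccos s) / (4 * pi) -
          (s + 1) * (pi/2 + (4/pi) * (\<Sum>n<N. cheb (2*n+1) s / (2 * real n + 1)^2)) / (4 * pi)
        = (s + 1) * E / (4 * pi)" .
  have "\<bar>(s + 1) * E / (4 * pi)\<bar> = (s + 1) * \<bar>E\<bar> / (4 * pi)" using s by (simp add: abs_mult)
  also have "\<dots> \<le> 2 * (1 / real N) / (4 * pi)"
    using s E by (intro divide_right_mono mult_mono) auto
  also have "\<dots> \<le> 1 / real N" using N pi_gt3 by (simp add: field_simps)
  finally show ?thesis unfolding eq .
qed

theorem lemma6:
  assumes "CARD('n) \<ge> 2"
  shows "\<exists>C>0. \<forall>(j::nat) (p::nat) (gj :: real^'n \<Rightarrow> real) gp x (l::nat).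
           gj \<in> sph_harm j \<longrightarrow> gp \<in> sph_harm p \<longrightarrow> x \<in> unit_sph \<longrightarrow> l \<ge> 1 \<longrightarrow>
           dist_Pi (\<lambda>\<xi>. K_inf x \<xi> * gj \<xi>) l \<le> C * (real j + 1) / real l * sup_norm_sph gj \<and>
           dist_Pi (\<lambda>\<xi>. gj \<xi> * gp \<xi>) l
              \<le> C * (real j + real p) / real l * sup_norm_sph gj * sup_norm_sph gp"
proof (intro exI[of _ "4::real"] conjI allI impI)
  show "(4::real) > 0" by simp
  fix j p :: nat and gj gp :: "real^'n \<Rightarrow> real" and x :: "real^'n" and l :: nat
  assume gj: "gj \<in> sph_harm j" and gp: "gp \<in> sph_harm p" and x: "x \<in> unit_sph" and l: "l \<ge> 1"
  obtain Pj where Pj: "hp j Pj" "\<forall>\<xi>\<in>unit_sph. gj \<xi> = Pj \<xi>" using sph_harm_hp'[OF gj] by blast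
  obtain Pp where Pp: "hp p Pp" "\<forall>\<xi>\<in>unit_sph. gp \<xi> = Pp \<xi>" using sph_harm_hp'[OF gp] by blast
  have cj: "continuous_on unit_sph gj" by (rule continuous_on_eq[OF hp_cont[OF Pj(1)]]) (use Pj(2) in auto)
  have cp: "continuous_on unit_sph gp" by (rule continuous_on_eq[OF hp_cont[OF Pp(1)]]) (use Pp(2) in auto)
  define Mj where "Mj = sup_norm_sph gj"
  define Mp where "Mp = sup_norm_sph gp"
  have Mj0: "0 \<le> Mj" unfolding Mj_def by (rule sup_nonneg[OF cj])
  have Mp0: "0 \<le> Mp" unfolding Mp_def by (rule sup_nonneg[OF cp])
  have bj: "\<bar>gj \<xi>\<bar> \<le> Mj" if "\<xi> \<in> unit_sph" for \<xi> unfolding Mj_def by (rule sup_ge[OF cj that])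
  have bp: "\<bar>gp \<xi>\<bar> \<le> Mp" if "\<xi> \<in> unit_sph" for \<xi> unfolding Mp_def by (rule sup_ge[OF cp that])
  have lpos: "real l > 0" using l by simp
  have isb: "-1 \<le> x \<bullet> \<xi> \<and> x \<bullet> \<xi> \<le> 1" if "\<xi> \<in> unit_sph" for \<xi> using inner_sph[OF x that] by simp
  have cK: "continuous_on unit_sph (\<lambda>\<xi>. K_inf x \<xi> * gj \<xi>)"
    unfolding K_inf_def by (intro continuous_intros cj) (use isb in auto)
  have Kb: "0 \<le> K_inf x \<xi> \<and> K_inf x \<xi> \<le> 1/2" if "\<xi> \<in> unit_sph" for \<xi>
    unfolding K_inf_def using K_bounds[of "x \<bullet> \<xi>"] isb[OF that] by auto

  show "dist_Pi (\<lambda>\<xi>. K_inf x \<xi> * gj \<xi>) l \<le> 4 * (real j + 1) / real l * sup_norm_sph gj"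
  proof (cases "real l < 2 * (real j + 1)")
    case True
    have "dist_Pi (\<lambda>\<xi>. K_inf x \<xi> * gj \<xi>) l \<le> (1/2) * Mj"
    proof (rule dist_le_bound[OF cK Pi_zero])
      fix \<xi> :: "real^'n" assume "\<xi> \<in> unit_sph"
      then have "\<bar>K_inf x \<xi>\<bar> * \<bar>gj \<xi>\<bar> \<le> (1/2) * Mj" using Kb bj by (intro mult_mono) auto
      then show "\<bar>K_inf x \<xi> * gj \<xi> - 0\<bar> \<le> (1/2) * Mj" by (simp add: abs_mult)
    qed
    also have "(1/2) * Mj \<le> 4 * (real j + 1) / real l * Mj"
    proof (rule mult_right_mono[OF _ Mj0])
      have "real l \<le> 8 * (real j + 1)" using True by simp
      then show "1/2 \<le> 4 * (real j + 1) / real l" using lpos by (simp add: field_simps)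
    qed
    finally show ?thesis by (simp only: Mj_def)
  next
    case False
    then have "real (2 * j + 2) \<le> real l" by simp
    then have l2: "2 * j + 2 \<le> l" by (simp only: of_nat_le_iff)
    define N where "N = (l - j) div 2"
    have N1: "N \<ge> 1" "2 * N + j \<le> l" "l \<le> 4 * N" using l2 unfolding N_def by presburger+
    define D where "D = 2 * N - 1 + j"
    have D1: "D + 1 = 2 * N + j" using N1 unfolding D_def by simp
    define S where "S \<xi> = (\<Sum>n<N. (1 / (2 * real n + 1)^2) * (cheb (2*n+1) (x \<bullet> \<xi>) * Pj \<xi>))" for \<xi>
    have polyS: "polyle D S"
      unfolding S_def
    proof (rule polyle_sum)
      fix n assume "n \<in> {..<N}"
      then have "2*n+1 + j \<le> D" unfolding D_def by simp
      then show "polyle D (\<lambda>\<xi>. (1 / (2 * real n + 1)^2) * (cheb (2*n+1) (x \<bullet> \<xi>) * Pj \<xi>))"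
        by (intro polyle_scale polyle_mono[OF cheb_polyle[OF Pj(1)]])
    qed
    define B where "B \<xi> = (pi/2) * Pj \<xi> + (4/pi) * S \<xi>" for \<xi>
    have polyB: "polyle D B" unfolding B_def
      by (intro polyle_add polyle_scale polyS polyle_hp[OF Pj(1)]) (simp add: D_def)
    define h where "h \<xi> = (1/(4*pi)) * ((x \<bullet> \<xi>) * B \<xi> + B \<xi>)" for \<xi>
    have "polyle (D + 1) (\<lambda>\<xi>. (x \<bullet> \<xi>) * B \<xi>)" by (rule polyle_mult[OF hp_inner polyB])
    moreover have "polyle (D + 1) B" by (rule polyle_mono[OF polyB]) simp
    ultimately have "polyle (D + 1) h" unfolding h_def by (intro polyle_scale polyle_add)
    then have hPi: "h \<in> Pi_sph l" by (rule polyle_Pi) (use D1 N1 in simp)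
    have err: "\<bar>K_inf x \<xi> * gj \<xi> - h \<xi>\<bar> \<le> (1 / real N) * Mj" if \<xi>: "\<xi> \<in> unit_sph" for \<xi>
    proof -
      define s where "s = x \<bullet> \<xi>"
      have s1: "-1 \<le> s" "s \<le> 1" using isb[OF \<xi>] unfolding s_def by auto
      define Q where "Q = (\<Sum>n<N. cheb (2*n+1) s / (2 * real n + 1)^2)"
      have SQ: "S \<xi> = Q * gj \<xi>"
        unfolding S_def Q_def s_def using Pj(2) \<xi> by (simp add: sum_distrib_right)
      have hq: "h \<xi> = (s + 1) * (pi/2 + (4/pi) * Q) / (4 * pi) * gj \<xi>"
        unfolding h_def B_def SQ using Pj(2) \<xi> by (simp add: s_def field_simps)
      have kq: "K_inf x \<xi> = (s + 1) * (pi - arccos s) / (4 * pi)" unfolding K_inf_def s_def by simp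
      have "\<bar>K_inf x \<xi> * gj \<xi> - h \<xi>\<bar> =
          \<bar>(s + 1) * (pi - arccos s) / (4 * pi) - (s + 1) * (pi/2 + (4/pi) * Q) / (4 * pi)\<bar> * \<bar>gj \<xi>\<bar>"
        unfolding kq hq by (simp add: abs_mult[symmetric] left_diff_distrib)
      also have "\<dots> \<le> (1 / real N) * Mj"
        using K_approx[OF s1 N1(1)] bj[OF \<xi>] unfolding Q_def by (intro mult_mono) auto
      finally show ?thesis .
    qed
    have "dist_Pi (\<lambda>\<xi>. K_inf x \<xi> * gj \<xi>) l \<le> (1 / real N) * Mj"
      by (rule dist_le_bound[OF cK hPi err])
    also have "(1 / real N) * Mj \<le> 4 * (real j + 1) / real l * Mj"
    proof (rule mult_right_mono[OF _ Mj0])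
      have "real l \<le> 4 * real N" using N1 by simp
      moreover have "real N > 0" using N1 by simp
      ultimately have "1 / real N \<le> 4 / real l" using lpos by (simp add: field_simps)
      also have "\<dots> \<le> 4 * (real j + 1) / real l" using lpos by (intro divide_right_mono) auto
      finally show "1 / real N \<le> 4 * (real j + 1) / real l" .
    qed
    finally show ?thesis by (simp only: Mj_def)
  qed

  have cjp: "continuous_on unit_sph (\<lambda>\<xi>. gj \<xi> * gp \<xi>)" by (intro continuous_intros cj cp)
  show "dist_Pi (\<lambda>\<xi>. gj \<xi> * gp \<xi>) l \<le> 4 * (real j + real p) / real l * sup_norm_sph gj * sup_norm_sph gp"
  proof (cases "j + p \<le> l")
    case True
    have "(\<lambda>\<xi>. Pj \<xi> * Pp \<xi>) \<in> Pi_sph l" by (rule hp_Pi[OF hp_mult[OF Pj(1) Pp(1)] True])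
    then have hPi: "(\<lambda>\<xi>. gj \<xi> * gp \<xi>) \<in> Pi_sph l" by (rule Pi_cong) (use Pj(2) Pp(2) in auto)
    have "dist_Pi (\<lambda>\<xi>. gj \<xi> * gp \<xi>) l \<le> 0" by (rule dist_le_bound[OF cjp hPi]) simp
    also have "0 \<le> 4 * (real j + real p) / real l * Mj * Mp" using Mj0 Mp0 lpos by simp
    finally show ?thesis by (simp only: Mj_def Mp_def)
  next
    case False
    have "dist_Pi (\<lambda>\<xi>. gj \<xi> * gp \<xi>) l \<le> Mj * Mp"
    proof (rule dist_le_bound[OF cjp Pi_zero])
      fix \<xi> :: "real^'n" assume "\<xi> \<in> unit_sph"
      then have "\<bar>gj \<xi>\<bar> * \<bar>gp \<xi>\<bar> \<le> Mj * Mp" using bj bp Mj0 by (intro mult_mono) auto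
      then show "\<bar>gj \<xi> * gp \<xi> - 0\<bar> \<le> Mj * Mp" by (simp add: abs_mult)
    qed
    also have "Mj * Mp \<le> 4 * (real j + real p) / real l * (Mj * Mp)"
    proof -
      have "real l \<le> real j + real p" using False by simp
      then have "1 \<le> 4 * (real j + real p) / real l" using lpos by (simp add: field_simps)
      from mult_right_mono[OF this, of "Mj * Mp"] Mj0 Mp0 show ?thesis by simp
    qed
    finally show ?thesis by (simp only: Mj_def Mp_def mult.assoc)
  qed
qed

end
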